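(* Let $\mathcal{S}\subset\mathbb{R}^n$ be compact convex with $\|x\|\le D$ on $\mathcal{S}$ ($D\ge1$), and let $f_1,\dots,f_T:\mathcal{S}\to\mathbb{R}$ be convex, differentiable, $\alpha$-exp-concave, with $\|\nabla f_t\|\le G$ on $\mathcal{S}$, and $T\ge2$. Let $\eta_i=\frac12\frac{\log T}{T\sqrt{2D}}2^{i-1}$, $N=\lceil\frac12\log_2(\frac{2DT^2}{\log^2T})\rceil+1$ and $\mathcal{H}=\{\gamma_i=1-\eta_i: i=1,\dots,N\}$, ordered so that $\gamma_1\ge\dots\ge\gamma_N$. For each $\gamma\in\mathcal{H}$ run a copy $A^\gamma$ of the Discounted Online Newton Step with discount factor $\gamma$ (with $\theta^\gamma_1\in\mathcal{S}$, $P_0=I$, $P_t=\gamma P_{t-1}+\nabla f_t(\theta_t^\gamma)\nabla f_t(\theta_t^\gamma)^\top$, $\theta^\gamma_{t+1}=\operatorname{argmin}_{z\in\mathcal{S}}(z-y)^\top P_t(z-y)$ with $y=\theta^\gamma_t-\frac1{\eta}P_t^{-1}\nabla f_t(\theta^\gamma_t)$, and step parameter $\eta\le\frac12\min\{\frac1{4GD},\alpha\}$), producing $\theta_t^\gamma$. Set initial weights $w_1^{\gamma_i}=\frac{C}{i(i+1)}$ with $C=1+1/|\mathcal{H}|$, play $\theta_t=\sum_{\gamma\in\mathcal{H}}w_t^\gamma\theta_t^\gamma$, and update $$w_{t+1}^\gamma=\frac{w_t^\gamma\exp(-\lambda f_t(\theta_t^\gamma))}{\sum_{\mu\in\mathcal{H}}w_t^\mu\exp(-\lambda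 f_t(\theta_t^\mu))}$$ with $\lambda=\alpha$. Then for any comparator sequence $z_1,\dots,z_T\in\mathcal{S}$ with $\sum_{t=2}^T\|z_t-z_{t-1}\|\le V$, $$\sum_{t=1}^T\big(f_t(\theta_t)-f_t(z_t)\big)\le O(\max\{\log T,\sqrt{TV}\}).$$
   Context: $\alpha$-exp-concave means $e^{-\alpha f_t}$ is concave on $\mathcal{S}$. $O(\cdot)$ hides constants depending only on $n,\alpha,G,D$ and the step parameter $\eta$. *)

theory Defs
  imports "HOL-Analysis.Analysis"
begin

definition dons_eta :: "nat \<Rightarrow> real \<Rightarrow> nat \<Rightarrow> real" where
  "dons_eta T D i = (1/2) * (ln (real T) / (real T * sqrt (2 * D))) * 2 ^ (i - 1)"

definition dons_gamma :: "nat \<Rightarrow> real \<Rightarrow> nat \<Rightarrow> real" where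
  "dons_gamma T D i = 1 - dons_eta T D i"

definition dons_N :: "nat \<Rightarrow> real \<Rightarrow> nat" where
  "dons_N T D = nat \<lceil>(1/2) * log 2 (2 * D * (real T)^2 / (ln (real T))^2)\<rceil> + 1"

definition outer :: "real ^ 'n \<Rightarrow> real ^ 'n ^ 'n" where
  "outer v = (\<chi> i j. v $ i * v $ j)"

fun dons_P :: "real \<Rightarrow> (nat \<Rightarrow> real ^ 'n \<Rightarrow> real ^ 'n) \<Rightarrow> (nat \<Rightarrow> real ^ 'n)
    \<Rightarrow> nat \<Rightarrow> real ^ 'n ^ 'n" where
  "dons_P \<gamma> g th 0 = mat 1"
| "dons_P \<gamma> g th (Suc t) = \<gamma> *\<^sub>R dons_P \<gamma> g th t + outer (g (Suc t) (th (Suc t)))"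

definition dons_run :: "(real ^ 'n) set \<Rightarrow> (nat \<Rightarrow> real ^ 'n \<Rightarrow> real ^ 'n) \<Rightarrow> real \<Rightarrow> real
    \<Rightarrow> nat \<Rightarrow> (nat \<Rightarrow> real ^ 'n) \<Rightarrow> bool" where
  "dons_run S g \<eta> \<gamma> T th \<longleftrightarrow> th 1 \<in> S \<and>
     (\<forall>t\<in>{1..<T}.
        (let P = dons_P \<gamma> g th t;
             y = th t - (1 / \<eta>) *\<^sub>R (matrix_inv P *v g t (th t))
         in th (Suc t) \<in> S \<and>
            (\<forall>z\<in>S. (th (Suc t) - y) \<bullet> (P *v (th (Suc t) - y)) \<le> (z - y) \<bullet> (P *v (z - y)))))"

text \<open>Meta weights: mix_w lam N f ths t i is the weight w_{t+1}^{gamma_i}.\<close>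
fun mix_w :: "real \<Rightarrow> nat \<Rightarrow> (nat \<Rightarrow> real ^ 'n \<Rightarrow> real) \<Rightarrow> (nat \<Rightarrow> nat \<Rightarrow> real ^ 'n)
    \<Rightarrow> nat \<Rightarrow> nat \<Rightarrow> real" where
  "mix_w lam N f ths 0 i = (1 + 1 / real N) / (real i * (real i + 1))"
| "mix_w lam N f ths (Suc t) i =
     mix_w lam N f ths t i * exp (- lam * f (Suc t) (ths i (Suc t))) /
     (\<Sum>j=1..N. mix_w lam N f ths t j * exp (- lam * f (Suc t) (ths j (Suc t))))"

definition mix_play :: "real \<Rightarrow> nat \<Rightarrow> (nat \<Rightarrow> real ^ 'n \<Rightarrow> real) \<Rightarrow> (nat \<Rightarrow> nat \<Rightarrow> real ^ 'n)
    \<Rightarrow> nat \<Rightarrow> real ^ 'n" where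
  "mix_play lam N f ths t = (\<Sum>i=1..N. mix_w lam N f ths (t - 1) i *\<^sub>R ths i t)"

end

theory Submission
  imports Defs
begin

lemma det_id_row_v:
  fixes v :: "real^'n"
  shows "det (\<chi> i. if i = k then v else axis i 1 :: real^'n^'n) = v$k"
proof -
  have v: "v = (\<Sum>j\<in>UNIV. v$j *s axis j 1)"
    by (simp add: vec_eq_iff sum_component axis_def if_distrib cong: if_cong)
  have "det (\<chi> i. if i = k then v else axis i 1 :: real^'n^'n)
      = det (\<chi> i. if i = k then (\<Sum>j\<in>UNIV. v$j *s axis j 1) else axis i 1 :: real^'n^'n)"
    by (simp only: v[symmetric])
  also have "\<dots> = (\<Sum>j\<in>UNIV. det (\<chi> i. if i = k then v$j *s axis j 1 else axis i 1 :: real^'n^'n))"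
    by (rule det_linear_row_sum) simp
  also have "\<dots> = (\<Sum>j\<in>UNIV. v$j * det (\<chi> i. if i = k then axis j 1 else axis i 1 :: real^'n^'n))"
    by (simp add: det_row_mul)
  also have "\<dots> = (\<Sum>j\<in>UNIV. if j = k then v$j else 0)"
  proof (rule sum.cong)
    fix j assume "j \<in> (UNIV::'n set)"
    show "v$j * det (\<chi> i. if i = k then axis j 1 else axis i 1 :: real^'n^'n) = (if j = k then v$j else 0)"
    proof (cases "j = k")
      case True
      have "(\<chi> i. if i = k then axis j 1 else axis i 1 :: real^'n^'n) = mat 1"
        using True by (simp add: vec_eq_iff mat_def axis_def)
      then show ?thesis using True by simp
    next
      case False
      have "det (\<chi> i. if i = k then axis j 1 else axis i 1 :: real^'n^'n) = 0"
        by (rule det_identical_rows[of k j]) (use False in \<open>auto simp: row_def vec_eq_iff\<close>)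
      then show ?thesis using False by simp
    qed
  qed simp
  also have "\<dots> = v$k" by simp
  finally show ?thesis .
qed

lemma det_G:
  fixes v u :: "real^'n"
  shows "finite K \<Longrightarrow> k \<notin> K \<Longrightarrow> det (\<chi> i. if i = k then v else if i \<in> K then axis i 1 + u$i *s v else axis i 1 :: real^'n^'n) = v$k"
proof (induction K rule: finite_induct)
  case empty
  have "(\<chi> i. if i = k then v else if i \<in> {} then axis i 1 + u$i *s v else axis i 1 :: real^'n^'n)
     = (\<chi> i. if i = k then v else axis i 1)" by (simp add: vec_eq_iff)
  then show ?case using det_id_row_v[of k v] by metis
next
  case (insert j K)
  let ?A = "(\<chi> i. if i = k then v else if i \<in> K then axis i 1 + u$i *s v else axis i 1 :: real^'n^'n)"
  have jk: "j \<noteq> k" using insert by auto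
  have eq: "(\<chi> i. if i = k then v else if i \<in> insert j K then axis i 1 + u$i *s v else axis i 1 :: real^'n^'n)
     = (\<chi> i. if i = j then row j ?A + u$j *s v else row i ?A)"
    using jk insert(2) by (auto simp: vec_eq_iff row_def)
  have sp: "u$j *s v \<in> vec.span {row i ?A |i. i \<noteq> j}"
  proof -
    have "v \<in> {row i ?A |i. i \<noteq> j}" using jk by (auto simp: row_def intro!: exI[of _ k])
    then show ?thesis by (intro vec.span_scale vec.span_base)
  qed
  show ?case unfolding eq det_row_span[OF sp] using insert by auto
qed

lemma det_rank1_K:
  fixes v u :: "real^'n"
  shows "finite K \<Longrightarrow> det (\<chi> i. if i \<in> K then axis i 1 + u$i *s v else axis i 1 :: real^'n^'n) = 1 + (\<Sum>i\<in>K. u$i * v$i)"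
proof (induction K rule: finite_induct)
  case empty
  have "(\<chi> i. if i \<in> {} then axis i 1 + u$i *s v else axis i 1 :: real^'n^'n) = mat 1"
    by (simp add: vec_eq_iff mat_def axis_def)
  then show ?case by simp
next
  case (insert k K)
  let ?c = "\<lambda>i. if i \<in> K then axis i 1 + u$i *s v else axis i 1 :: real^'n"
  have eq: "(\<chi> i. if i \<in> insert k K then axis i 1 + u$i *s v else axis i 1 :: real^'n^'n)
     = (\<chi> i. if i = k then axis i 1 + u$i *s v else ?c i)" by (auto simp: vec_eq_iff)
  have e1: "(\<chi> i. if i = k then axis i 1 else ?c i) = (\<chi> i. if i \<in> K then axis i 1 + u$i *s v else axis i 1 :: real^'n^'n)"
    using insert(2) by (auto simp: vec_eq_iff)
  have e2: "det (\<chi> i. if i = k then u$i *s v else ?c i) = u$k * det (\<chi> i. if i = k then v else ?c i)"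
  proof -
    have "(\<chi> i. if i = k then u$i *s v else ?c i) = (\<chi> i. if i = k then u$k *s v else ?c i)"
      by (auto simp: vec_eq_iff)
    then show ?thesis by (simp add: det_row_mul)
  qed
  have e3: "det (\<chi> i. if i = k then v else ?c i) = v$k"
    using det_G[of K k v u] insert(1,2) by simp
  show ?case unfolding eq det_row_add e1 e2 e3 insert(3) using insert by (simp add: algebra_simps)
qed

lemma det_rank1:
  fixes v u :: "real^'n"
  shows "det (mat 1 + (\<chi> i j. u$i * v$j) :: real^'n^'n) = 1 + u \<bullet> v"
proof -
  have "(mat 1 + (\<chi> i j. u$i * v$j) :: real^'n^'n) = (\<chi> i. if i \<in> UNIV then axis i 1 + u$i *s v else axis i 1)"
    by (auto simp: vec_eq_iff mat_def axis_def)
  then show ?thesis using det_rank1_K[of UNIV u v] by (simp add: inner_vec_def)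
qed

lemma inv_props:
  fixes A :: "real^'n^'n"
  assumes "invertible A"
  shows "A ** matrix_inv A = mat 1" "matrix_inv A ** A = mat 1"
proof -
  from assms obtain B where "A ** B = mat 1 \<and> B ** A = mat 1" unfolding invertible_def by blast
  then have "A ** matrix_inv A = mat 1 \<and> matrix_inv A ** A = mat 1"
    unfolding matrix_inv_def by (rule someI)
  then show "A ** matrix_inv A = mat 1" "matrix_inv A ** A = mat 1" by auto
qed

lemma inv_mulv:
  fixes A :: "real^'n^'n"
  assumes "invertible A"
  shows "A *v (matrix_inv A *v x) = x"
  by (simp add: matrix_vector_mul_assoc inv_props[OF assms])

lemma det_scaleR:
  fixes A :: "real^'n^'n"
  shows "det (c *\<^sub>R A) = c ^ CARD('n) * det A"
proof -
  have "c *\<^sub>R A = (\<chi> i. c *s (A$i))" by (simp add: vec_eq_iff)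
  moreover have "A = (\<chi> i. A$i)" by simp
  ultimately show ?thesis using det_rows_mul[of "\<lambda>i. c" "\<lambda>i. A$i"] by (simp del: vec_lambda_eta)
qed

lemma mat_mul_rank1:
  fixes A :: "real^'n^'n"
  shows "A ** (\<chi> i j. u$i * v$j) = (\<chi> i j. (A *v u)$i * v$j)"
  by (simp add: vec_eq_iff matrix_matrix_mult_def matrix_vector_mult_def sum_distrib_right mult.assoc)

lemma det_update:
  fixes A :: "real^'n^'n"
  assumes "invertible A"
  shows "det (A + c *\<^sub>R outer g) = det A * (1 + c * (g \<bullet> (matrix_inv A *v g)))"
proof -
  let ?w = "matrix_inv A *v g"
  have "A ** (mat 1 + (\<chi> i j. (c *\<^sub>R ?w)$i * g$j)) = A + (\<chi> i j. (A *v (c *\<^sub>R ?w))$i * g$j)"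
    by (simp only: matrix_add_ldistrib matrix_mul_rid mat_mul_rank1)
  also have "\<dots> = A + c *\<^sub>R outer g"
    by (simp add: matrix_vector_mult_scaleR inv_mulv[OF assms] outer_def vec_eq_iff)
  finally have "det (A + c *\<^sub>R outer g) = det A * det (mat 1 + (\<chi> i j. (c *\<^sub>R ?w)$i * g$j))"
    by (metis det_mul)
  also have "\<dots> = det A * (1 + c * (g \<bullet> ?w))"
    unfolding det_rank1 by (simp add: inner_commute)
  finally show ?thesis .
qed

definition qf :: "real^'n^'n \<Rightarrow> real^'n \<Rightarrow> real" where
  "qf P x = x \<bullet> (P *v x)"

lemma qf_outer: "x \<bullet> (outer g *v x) = (g \<bullet> x)^2"
  by (simp add: inner_vec_def matrix_vector_mult_def outer_def power2_eq_square
       sum_distrib_left sum_distrib_right sum_product mult_ac)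

lemma sym_form:
  fixes P :: "real^'n^'n"
  assumes "\<And>i j. P$i$j = P$j$i"
  shows "x \<bullet> (P *v y) = y \<bullet> (P *v x)"
proof -
  have "x \<bullet> (P *v y) = (\<Sum>i\<in>UNIV. \<Sum>j\<in>UNIV. x$i * P$i$j * y$j)"
    by (simp add: inner_vec_def matrix_vector_mult_def sum_distrib_left mult_ac)
  also have "\<dots> = (\<Sum>j\<in>UNIV. \<Sum>i\<in>UNIV. x$i * P$i$j * y$j)" by (rule sum.swap)
  also have "\<dots> = y \<bullet> (P *v x)"
    by (simp add: inner_vec_def matrix_vector_mult_def sum_distrib_left mult_ac assms)
  finally show ?thesis .
qed

lemma dP_sym: "dons_P \<gamma> g th t $ i $ j = dons_P \<gamma> g th t $ j $ i"
  by (induction t) (auto simp: mat_def outer_def)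

lemma dP_qf: "qf (dons_P \<gamma> g th (Suc t)) x = \<gamma> * qf (dons_P \<gamma> g th t) x + (g (Suc t) (th (Suc t)) \<bullet> x)^2"
  by (simp add: qf_def matrix_vector_mult_add_rdistrib inner_add_right qf_outer
      flip: scaleR_matrix_vector_assoc)

lemma dP_pos: "0 < \<gamma> \<Longrightarrow> qf (dons_P \<gamma> g th t) x \<ge> \<gamma>^t * (norm x)^2"
proof (induction t)
  case 0
  then show ?case by (simp add: qf_def power2_norm_eq_inner)
next
  case (Suc t)
  have "\<gamma>^(Suc t) * (norm x)^2 = \<gamma> * (\<gamma>^t * (norm x)^2)" by simp
  also have "\<dots> \<le> \<gamma> * qf (dons_P \<gamma> g th t) x" using Suc by simp
  also have "\<dots> \<le> qf (dons_P \<gamma> g th (Suc t)) x" unfolding dP_qf by simp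
  finally show ?case .
qed

lemma dP_qf_nonneg: "0 < \<gamma> \<Longrightarrow> qf (dons_P \<gamma> g th t) x \<ge> 0"
  by (rule order_trans[OF _ dP_pos]) auto

lemma dP_det_pos:
  assumes "0 < \<gamma>"
  shows "det (dons_P \<gamma> g th t) > 0"
proof (induction t)
  case 0
  then show ?case by simp
next
  case (Suc t)
  let ?B = "\<gamma> *\<^sub>R dons_P \<gamma> g th t"
  let ?v = "g (Suc t) (th (Suc t))"
  have dB: "det ?B > 0" using Suc assms by (simp add: det_scaleR)
  then have iB: "invertible ?B" by (simp add: invertible_det_nz)
  let ?w = "matrix_inv ?B *v ?v"
  have "?v \<bullet> ?w = (?B *v ?w) \<bullet> ?w" by (simp add: inv_mulv[OF iB])
  also have "\<dots> = \<gamma> * qf (dons_P \<gamma> g th t) ?w"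
    by (simp add: qf_def inner_commute flip: scaleR_matrix_vector_assoc)
  finally have nn: "?v \<bullet> ?w \<ge> 0" using dP_qf_nonneg[OF assms, of g th t ?w] assms by simp
  have "det (dons_P \<gamma> g th (Suc t)) = det (?B + 1 *\<^sub>R outer ?v)" by simp
  also have "\<dots> = det ?B * (1 + 1 * (?v \<bullet> ?w))" by (rule det_update[OF iB])
  finally show ?case using dB nn by simp
qed

lemma dP_logdet:
  fixes g :: "nat \<Rightarrow> real^'n \<Rightarrow> real^'n"
  assumes "0 < \<gamma>"
  shows "g (Suc t) (th (Suc t)) \<bullet> (matrix_inv (dons_P \<gamma> g th (Suc t)) *v g (Suc t) (th (Suc t)))
     \<le> ln (det (dons_P \<gamma> g th (Suc t))) - ln (det (dons_P \<gamma> g th t)) - CARD('n) * ln \<gamma>"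
proof -
  let ?A = "dons_P \<gamma> g th (Suc t)"
  let ?v = "g (Suc t) (th (Suc t))"
  let ?r = "?v \<bullet> (matrix_inv ?A *v ?v)"
  have dA: "det ?A > 0" by (rule dP_det_pos[OF assms])
  have d0: "det (dons_P \<gamma> g th t) > 0" by (rule dP_det_pos[OF assms])
  have iA: "invertible ?A" using dA by (simp add: invertible_det_nz)
  have "?A + (-1) *\<^sub>R outer ?v = \<gamma> *\<^sub>R dons_P \<gamma> g th t" by simp
  then have "\<gamma>^CARD('n) * det (dons_P \<gamma> g th t) = det ?A * (1 - ?r)"
    using det_update[OF iA, of "-1" ?v] by (simp add: det_scaleR)
  then have x: "1 - ?r = \<gamma>^CARD('n) * det (dons_P \<gamma> g th t) / det ?A"
    using dA by (simp add: field_simps)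
  have xpos: "\<gamma>^CARD('n) * det (dons_P \<gamma> g th t) / det ?A > 0" using dA d0 assms by simp
  have "ln (\<gamma>^CARD('n) * det (dons_P \<gamma> g th t) / det ?A) \<le> (1 - ?r) - 1"
    using ln_le_minus_one[OF xpos] x by simp
  moreover have "ln (\<gamma>^CARD('n) * det (dons_P \<gamma> g th t) / det ?A)
      = CARD('n) * ln \<gamma> + ln (det (dons_P \<gamma> g th t)) - ln (det ?A)"
    using dA d0 assms by (simp add: ln_div ln_mult ln_realpow)
  ultimately show ?thesis by simp
qed

lemma dP_entry:
  assumes "0 < \<gamma>" "\<gamma> < 1" "\<forall>s\<in>{1..t}. norm (g s (th s)) \<le> G"
  shows "\<bar>dons_P \<gamma> g th t $ i $ j\<bar> \<le> 1 + G^2 / (1 - \<gamma>)"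
  using assms(3)
proof (induction t)
  case 0
  have "G^2 / (1 - \<gamma>) \<ge> 0" using assms by simp
  then show ?case by (simp add: mat_def)
next
  case (Suc t)
  let ?L = "1 + G^2 / (1 - \<gamma>)"
  let ?v = "g (Suc t) (th (Suc t))"
  have IH: "\<bar>dons_P \<gamma> g th t $ i $ j\<bar> \<le> ?L" using Suc by auto
  have nv: "norm ?v \<le> G" using Suc.prems by auto
  have "\<bar>?v$i * ?v$j\<bar> \<le> norm ?v * norm ?v"
    unfolding abs_mult by (intro mult_mono component_le_norm_cart) auto
  also have "\<dots> \<le> G^2" using mult_mono[OF nv nv] nv norm_ge_zero[of ?v] by (simp add: power2_eq_square)
  finally have vv: "\<bar>?v$i * ?v$j\<bar> \<le> G^2" .
  have "\<bar>dons_P \<gamma> g th (Suc t) $ i $ j\<bar> = \<bar>\<gamma> * dons_P \<gamma> g th t $ i $ j + ?v$i * ?v$j\<bar>"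
    by (simp add: outer_def)
  also have "\<dots> \<le> \<gamma> * \<bar>dons_P \<gamma> g th t $ i $ j\<bar> + \<bar>?v$i * ?v$j\<bar>"
    using assms(1) by (simp add: abs_mult abs_triangle_ineq[THEN order_trans])
  also have "\<dots> \<le> \<gamma> * ?L + G^2" using IH vv assms(1) by (intro add_mono mult_left_mono) auto
  also have "\<dots> = \<gamma> + G^2 / (1 - \<gamma>)" using assms by (simp add: field_simps)
  also have "\<dots> \<le> ?L" using assms by simp
  finally show ?case .
qed

lemma det_bound:
  fixes A :: "real^'n^'n"
  assumes "\<And>i j. \<bar>A$i$j\<bar> \<le> L" "1 \<le> L"
  shows "det A \<le> fact CARD('n) * L ^ CARD('n)"
proof -
  have "det A \<le> \<bar>det A\<bar>" by simp
  also have "\<dots> \<le> (\<Sum>p\<in>{p. p permutes (UNIV::'n set)}. \<bar>of_int (sign p) * (\<Prod>i\<in>UNIV. A$i$p i)\<bar>)"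
    unfolding det_def by (rule sum_abs)
  also have "\<dots> \<le> (\<Sum>p\<in>{p. p permutes (UNIV::'n set)}. L ^ CARD('n))"
  proof (rule sum_mono)
    fix p assume "p \<in> {p. p permutes (UNIV::'n set)}"
    have "\<bar>of_int (sign p) * (\<Prod>i\<in>UNIV. A$i$p i)\<bar> = (\<Prod>i\<in>UNIV. \<bar>A$i$p i\<bar>)"
      by (simp add: abs_mult sign_def abs_prod)
    also have "\<dots> \<le> L ^ CARD('n)"
      by (rule prod_le_power) (use assms in auto)
    finally show "\<bar>of_int (sign p) * (\<Prod>i\<in>UNIV. A$i$p i)\<bar> \<le> L ^ CARD('n)" .
  qed
  also have "\<dots> = fact CARD('n) * L ^ CARD('n)"
    by (simp add: card_permutations)
  finally show ?thesis .
qed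

lemma bilin_bound:
  fixes A :: "real^'n^'n"
  assumes "\<And>i j. \<bar>A$i$j\<bar> \<le> L"
  shows "\<bar>x \<bullet> (A *v y)\<bar> \<le> L * CARD('n)^2 * norm x * norm y"
proof -
  have L0: "0 \<le> L" by (rule order_trans[OF abs_ge_zero assms])
  have "x \<bullet> (A *v y) = (\<Sum>i\<in>UNIV. \<Sum>j\<in>UNIV. x$i * A$i$j * y$j)"
    by (simp add: inner_vec_def matrix_vector_mult_def sum_distrib_left mult_ac)
  then have "\<bar>x \<bullet> (A *v y)\<bar> \<le> (\<Sum>i\<in>UNIV. \<bar>\<Sum>j\<in>UNIV. x$i * A$i$j * y$j\<bar>)"
    by (simp add: sum_abs)
  also have "\<dots> \<le> (\<Sum>i\<in>(UNIV::'n set). \<Sum>j\<in>(UNIV::'n set). norm x * L * norm y)"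
  proof (intro sum_mono)
    fix i :: 'n
    have "\<bar>\<Sum>j\<in>UNIV. x$i * A$i$j * y$j\<bar> \<le> (\<Sum>j\<in>UNIV. \<bar>x$i * A$i$j * y$j\<bar>)" by (rule sum_abs)
    also have "\<dots> \<le> (\<Sum>j\<in>(UNIV::'n set). norm x * L * norm y)"
    proof (rule sum_mono)
      fix j
      show "\<bar>x$i * A$i$j * y$j\<bar> \<le> norm x * L * norm y"
        unfolding abs_mult
        by (intro mult_mono component_le_norm_cart assms) (auto simp: L0)
    qed
    finally show "\<bar>\<Sum>j\<in>UNIV. x$i * A$i$j * y$j\<bar> \<le> (\<Sum>j\<in>(UNIV::'n set). norm x * L * norm y)" .
  qed
  also have "\<dots> = L * CARD('n)^2 * norm x * norm y" by (simp add: power2_eq_square)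
  finally show ?thesis .
qed

lemma qf_expand:
  fixes P :: "real^'n^'n"
  assumes "\<And>i j. P$i$j = P$j$i"
  shows "qf P (a + s *\<^sub>R b) = qf P a + 2 * s * (a \<bullet> (P *v b)) + s^2 * qf P b"
  using sym_form[OF assms, of b a]
  by (simp add: qf_def matrix_vector_right_distrib matrix_vector_mult_scaleR inner_add_left
      inner_add_right power2_eq_square algebra_simps)

lemma proj_lemma:
  fixes P :: "real^'n^'n"
  assumes sym: "\<And>i j. P$i$j = P$j$i" and psd: "\<And>x. qf P x \<ge> 0"
    and S: "convex S" and th: "th' \<in> S" and u: "u \<in> S"
    and min: "\<forall>z\<in>S. qf P (th' - y) \<le> qf P (z - y)"
  shows "qf P (th' - u) \<le> qf P (y - u)"
proof -
  let ?a = "th' - y" and ?b = "u - th'"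
  let ?c = "?a \<bullet> (P *v ?b)" and ?Q = "qf P ?b"
  have key: "2 * ?c + s * ?Q \<ge> 0" if s: "0 < s" "s \<le> 1" for s
  proof -
    have "th' + s *\<^sub>R ?b \<in> S"
    proof -
      have "th' + s *\<^sub>R ?b = (1 - s) *\<^sub>R th' + s *\<^sub>R u" by (simp add: algebra_simps)
      then show ?thesis using convexD[OF S th u, of "1 - s" s] s by simp
    qed
    then have "qf P ?a \<le> qf P ((th' + s *\<^sub>R ?b) - y)" using min by blast
    also have "(th' + s *\<^sub>R ?b) - y = ?a + s *\<^sub>R ?b" by (simp add: algebra_simps)
    finally have "0 \<le> 2 * s * ?c + s^2 * ?Q" unfolding qf_expand[OF sym] by simp
    then have "0 \<le> s * (2 * ?c + s * ?Q)" by (simp add: power2_eq_square algebra_simps)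
    then show ?thesis using s by (simp add: zero_le_mult_iff)
  qed
  have c0: "?c \<ge> 0"
  proof (rule ccontr)
    assume neg: "\<not> ?c \<ge> 0"
    show False
    proof (cases "?Q = 0")
      case True
      then show False using key[of 1] neg by simp
    next
      case False
      then have Qp: "?Q > 0" using psd[of ?b] by simp
      let ?s = "min 1 (- ?c / ?Q)"
      have s: "0 < ?s" "?s \<le> 1" using neg Qp by (auto simp: field_simps)
      have "?s * ?Q \<le> (- ?c / ?Q) * ?Q" using Qp by (intro mult_right_mono) auto
      also have "\<dots> = - ?c" using Qp by simp
      finally show False using key[OF s] neg by simp
    qed
  qed
  have "y - u = (- ?a) + (-1) *\<^sub>R ?b" by (simp add: algebra_simps)
  then have "qf P (y - u) = qf P (- ?a) + 2 * (-1) * ((- ?a) \<bullet> (P *v ?b)) + qf P ?b"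
    using qf_expand[OF sym, of "- ?a" "-1" ?b] by simp
  also have "\<dots> = qf P ?a + 2 * ?c + qf P ?b"
  proof -
    have m1: "qf P (- ?a) = qf P ?a" by (simp only: qf_def vec.neg inner_minus_left inner_minus_right minus_minus)
    have m2: "(- ?a) \<bullet> (P *v ?b) = - ?c" by (simp only: inner_minus_left)
    show ?thesis unfolding m1 m2 by simp
  qed
  finally have "qf P (y - u) \<ge> qf P ?b" using c0 psd[of ?a] by simp
  moreover have "qf P (th' - u) = qf P ?b"
    using qf_expand[OF sym, of 0 "-1" ?b] by (simp add: qf_def algebra_simps)
  ultimately show ?thesis by simp
qed

lemma ons_expand:
  fixes P :: "real^'n^'n"
  assumes sym: "\<And>i j. P$i$j = P$j$i" and inv: "invertible P" and eta: "\<eta> \<noteq> 0"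
  shows "qf P ((th - (1/\<eta>) *\<^sub>R (matrix_inv P *v v)) - u)
     = qf P (th - u) - (2/\<eta>) * (v \<bullet> (th - u)) + (1/\<eta>^2) * (v \<bullet> (matrix_inv P *v v))"
proof -
  let ?w = "matrix_inv P *v v"
  have Pw: "P *v ?w = v" by (rule inv_mulv[OF inv])
  have e: "(th - (1/\<eta>) *\<^sub>R ?w) - u = (th - u) + (- 1/\<eta>) *\<^sub>R ?w" by (simp add: algebra_simps)
  have "(th - u) \<bullet> (P *v ?w) = v \<bullet> (th - u)" by (simp add: Pw inner_commute)
  moreover have "qf P ?w = v \<bullet> ?w" by (simp add: qf_def Pw inner_commute)
  ultimately show ?thesis unfolding e qf_expand[OF sym]
    by (simp add: power2_eq_square field_simps)
qed

lemma concave_tangent: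
  fixes h :: "'a::real_normed_vector \<Rightarrow> real"
  assumes conc: "concave_on S h" and S: "convex S" and x: "x \<in> S" and y: "y \<in> S"
    and der: "(h has_derivative h') (at y within S)"
  shows "h x \<le> h y + h' (x - y)"
proof (rule ccontr)
  assume "\<not> ?thesis"
  then have dpos: "h x - h y - h' (x - y) > 0" by simp
  let ?\<delta> = "h x - h y - h' (x - y)"
  have xy: "x \<noteq> y" using dpos by (auto simp: linear_simps(3)[OF has_derivative_bounded_linear[OF der]])
  then have nxy: "norm (x - y) > 0" by simp
  have bl: "bounded_linear h'" using der by (rule has_derivative_bounded_linear)
  from der[unfolded has_derivative_within_alt] obtain d where d: "d > 0"
    and dd: "\<And>z. z \<in> S \<Longrightarrow> norm (z - y) < d \<Longrightarrow> norm (h z - h y - h' (z - y)) \<le> (?\<delta> / (2 * norm (x - y))) * norm (z - y)"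
    using dpos nxy by (metis divide_pos_pos mult_pos_pos zero_less_numeral)
  define s where "s = min 1 (d / (2 * norm (x - y)))"
  have s: "0 < s" "s \<le> 1" using d nxy by (auto simp: s_def)
  have sd: "s * norm (x - y) \<le> d / 2"
  proof -
    have "s * norm (x - y) \<le> (d / (2 * norm (x - y))) * norm (x - y)"
      unfolding s_def by (intro mult_right_mono) auto
    also have "\<dots> = d / 2" using nxy by simp
    finally show ?thesis .
  qed
  define z where "z = y + s *\<^sub>R (x - y)"
  have zeq: "z = (1 - s) *\<^sub>R y + s *\<^sub>R x" by (simp add: z_def algebra_simps)
  have zS: "z \<in> S" unfolding zeq using convexD[OF S y x, of "1 - s" s] s by simp
  have nz: "norm (z - y) = s * norm (x - y)" using s by (simp add: z_def)
  have "norm (z - y) < d" using nz sd d by simp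
  then have b1: "norm (h z - h y - h' (z - y)) \<le> (?\<delta> / (2 * norm (x - y))) * (s * norm (x - y))"
    using dd[OF zS] nz by simp
  also have "\<dots> = s * ?\<delta> / 2" using nxy by (simp add: field_simps)
  finally have b1': "norm (h z - h y - h' (z - y)) \<le> s * ?\<delta> / 2" .
  have "h' (z - y) = s * h' (x - y)" by (simp add: z_def linear_simps[OF bl])
  moreover have "h z - h y - h' (z - y) \<le> s * ?\<delta> / 2"
    using b1' abs_ge_self order_trans by (metis real_norm_def)
  ultimately have b2: "h z - h y - s * h' (x - y) \<le> s * ?\<delta> / 2" by simp
  have "h z \<ge> (1 - s) * h y + s * h x"
  proof -
    have "(\<lambda>x. - h x) ((1 - s) *\<^sub>R y + s *\<^sub>R x) \<le> (1 - s) * (- h y) + s * (- h x)"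
      using conc[unfolded concave_on_def] s by (intro convex_onD) (auto simp: x y)
    then show ?thesis unfolding zeq by simp
  qed
  then have "s * (h x - h y) \<le> h z - h y" by (simp add: algebra_simps)
  with b2 have "s * ?\<delta> \<le> s * ?\<delta> / 2" by (simp add: algebra_simps)
  then have "s * ?\<delta> \<le> 0" by simp
  moreover have "s * ?\<delta> > 0" using s dpos by simp
  ultimately show False by linarith
qed

lemma ln_quad_bound:
  fixes z :: real
  assumes "\<bar>z\<bar> \<le> 1/2"
  shows "ln (1 - z) \<le> - z - z^2 / 4"
proof -
  let ?phi = "\<lambda>z::real. ln (1 - z) + z + z^2 / 4"
  have der: "(?phi has_real_derivative (- (z/2) * (1 + z) / (1 - z))) (at z)" if "z < 1" for z :: real
  proof -
    have "(?phi has_real_derivative (- 1 / (1 - z) + 1 + 2 * z / 4)) (at z)"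
      using that by (auto intro!: derivative_eq_intros simp: field_simps)
    moreover have "- 1 / (1 - z) + 1 + 2 * z / 4 = - (z/2) * (1 + z) / (1 - z)"
      using that by (simp add: field_simps)
    ultimately show ?thesis by simp
  qed
  have "?phi z \<le> ?phi 0"
  proof (cases "z \<ge> 0")
    case True
    show ?thesis
    proof (rule DERIV_nonpos_imp_nonincreasing[of 0 z ?phi])
      fix x assume "0 \<le> x" "x \<le> z"
      then show "\<exists>y. (?phi has_real_derivative y) (at x) \<and> y \<le> 0"
        using assms by (intro exI[of _ "- (x/2) * (1 + x) / (1 - x)"] conjI der)
          (auto intro!: divide_nonneg_pos mult_nonneg_nonneg simp: )
    qed (use True in auto)
  next
    case False
    show ?thesis
    proof (rule DERIV_nonneg_imp_nondecreasing[of z 0 ?phi])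
      fix x assume "z \<le> x" "x \<le> 0"
      moreover have "- (x/2) * (1 + x) / (1 - x) \<ge> 0" using calculation assms
        by (intro divide_nonneg_pos) (auto intro!: mult_nonpos_nonneg)
      ultimately show "\<exists>y. (?phi has_real_derivative y) (at x) \<and> 0 \<le> y"
        using assms by (intro exI[of _ "- (x/2) * (1 + x) / (1 - x)"] conjI der) auto
    qed (use False in auto)
  qed
  then show ?thesis by simp
qed

lemma fin_arith:
  fixes \<eta> \<Delta> d :: real
  assumes "\<eta> > 0" "- 2 * \<eta> * \<Delta> \<le> - (2 * \<eta> * d) - (2 * \<eta> * d)^2 / 4"
  shows "\<Delta> \<ge> d + (\<eta>/2) * d^2"
proof -
  have "2 * \<eta> * (d + (\<eta>/2) * d^2) \<le> 2 * \<eta> * \<Delta>"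
    using assms(2) by (simp add: power2_eq_square algebra_simps)
  then show ?thesis using assms(1) by simp
qed

lemma expconc_curv:
  fixes f :: "'a::real_inner \<Rightarrow> real"
  assumes alpha: "\<alpha> > 0" and eta: "\<eta> > 0" "\<eta> \<le> \<alpha> / 2" "\<eta> * (8 * G * D) \<le> 1"
    and S: "convex S" and bnd: "\<forall>x\<in>S. norm x \<le> D"
    and conc: "concave_on S (\<lambda>x. exp (- \<alpha> * f x))"
    and der: "(f has_derivative (\<lambda>h. gy \<bullet> h)) (at y within S)" and ng: "norm gy \<le> G"
    and x: "x \<in> S" and y: "y \<in> S"
  shows "f x \<ge> f y + gy \<bullet> (x - y) + (\<eta>/2) * (gy \<bullet> (x - y))^2"
proof -
  let ?d = "gy \<bullet> (x - y)"
  have hder: "((\<lambda>x. exp (- \<alpha> * f x)) has_derivative (\<lambda>h. (- \<alpha> * (gy \<bullet> h)) * exp (- \<alpha> * f y))) (at y within S)"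
    by (rule DERIV_compose_FDERIV[where f = exp and g = "\<lambda>x. - \<alpha> * f x", OF DERIV_exp])
       (intro derivative_intros der)
  have t: "exp (- \<alpha> * f x) \<le> exp (- \<alpha> * f y) + (- \<alpha> * ?d) * exp (- \<alpha> * f y)"
    using concave_tangent[OF conc S x y hder] by simp
  then have t': "exp (- \<alpha> * f x) \<le> exp (- \<alpha> * f y) * (1 - \<alpha> * ?d)"
    by (simp add: algebra_simps)
  have "exp (- \<alpha> * (f x - f y)) = exp (- \<alpha> * f x) / exp (- \<alpha> * f y)"
    by (simp add: exp_diff[symmetric] algebra_simps)
  then have t2: "exp (- \<alpha> * (f x - f y)) \<le> 1 - \<alpha> * ?d"
    using t' by (simp add: divide_le_eq mult.commute)
  have pos: "1 - \<alpha> * ?d > 0" using t2 exp_gt_zero[of "- \<alpha> * (f x - f y)"] by linarith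
  have l1: "- \<alpha> * (f x - f y) \<le> ln (1 - \<alpha> * ?d)"
    using t2 pos by (metis exp_le_cancel_iff exp_ln)
  let ?p = "2 * \<eta> / \<alpha>"
  have p: "0 \<le> ?p" "?p \<le> 1" using alpha eta by (auto simp: field_simps)
  have lc: "ln ((1 - ?p) * 1 + ?p * (1 - \<alpha> * ?d)) \<ge> (1 - ?p) * ln 1 + ?p * ln (1 - \<alpha> * ?d)"
  proof -
    have "(\<lambda>x. - ln x) ((1 - ?p) *\<^sub>R 1 + ?p *\<^sub>R (1 - \<alpha> * ?d)) \<le> (1 - ?p) * (- ln 1) + ?p * (- ln (1 - \<alpha> * ?d))"
      using ln_concave[unfolded concave_on_def] p pos by (intro convex_onD) auto
    then show ?thesis by simp
  qed
  have e1: "(1 - ?p) * 1 + ?p * (1 - \<alpha> * ?d) = 1 - 2 * \<eta> * ?d" using alpha by (simp add: field_simps)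
  have l2: "?p * ln (1 - \<alpha> * ?d) \<le> ln (1 - 2 * \<eta> * ?d)" using lc unfolding e1 by simp
  have dbound: "\<bar>?d\<bar> \<le> G * (2 * D)"
  proof -
    have "\<bar>?d\<bar> \<le> norm gy * norm (x - y)" by (rule Cauchy_Schwarz_ineq2)
    also have "\<dots> \<le> G * (2 * D)"
    proof (intro mult_mono ng norm_ge_zero)
      have "norm x \<le> D" "norm y \<le> D" using bnd x y by auto
      then show "norm (x - y) \<le> 2 * D" using norm_triangle_ineq4[of x y] by linarith
    qed (use ng norm_ge_zero[of gy] in linarith)
    finally show ?thesis .
  qed
  have zb: "\<bar>2 * \<eta> * ?d\<bar> \<le> 1/2"
  proof -
    have "\<bar>2 * \<eta> * ?d\<bar> = 2 * \<eta> * \<bar>?d\<bar>" using eta by (simp add: abs_mult)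
    also have "\<dots> \<le> 2 * \<eta> * (G * (2 * D))" using dbound eta by (intro mult_left_mono) auto
    also have "\<dots> = (\<eta> * (8 * G * D)) / 2" by simp
    also have "\<dots> \<le> 1/2" using eta by (simp add: mult_ac)
    finally show ?thesis .
  qed
  have l3: "ln (1 - 2 * \<eta> * ?d) \<le> - (2 * \<eta> * ?d) - (2 * \<eta> * ?d)^2 / 4" by (rule ln_quad_bound[OF zb])
  have A: "- \<alpha> * (f x - f y) * ?p \<le> - (2 * \<eta> * ?d) - (2 * \<eta> * ?d)^2 / 4"
    using l2 l3 mult_right_mono[OF l1 p(1)] by (simp add: mult.commute)
  moreover have "- \<alpha> * (f x - f y) * ?p = - 2 * \<eta> * (f x - f y)" using alpha by simp
  ultimately have A2: "- 2 * \<eta> * (f x - f y) \<le> - (2 * \<eta> * ?d) - (2 * \<eta> * ?d)^2 / 4" by simp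
  show ?thesis using fin_arith[OF eta(1) A2] by simp
qed

lemma qf_diff:
  fixes P :: "real^'n^'n"
  assumes "\<And>i j. P$i$j = P$j$i"
  shows "qf P a - qf P b = (a - b) \<bullet> (P *v (a + b))"
  using sym_form[OF assms, of a b]
  by (simp add: qf_def matrix_vector_right_distrib inner_diff_left inner_add_right algebra_simps)

lemma aux_drop: "(a::real) \<le> c * (X - q) + Y \<Longrightarrow> 0 \<le> q \<Longrightarrow> 0 \<le> c \<Longrightarrow> a \<le> c * X + Y"
  by (smt (verit) mult_left_mono right_diff_distrib)

lemma arith_step:
  fixes A B h F K Sm Q c L mm lg gQ Q2 r L' n \<delta> Q2' Sm2 mm2 :: real
  assumes "A \<le> h * (F + K * Sm - Q) + c * (L - mm * lg)"
    "B \<le> h * (gQ - Q2) + c * r"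
    "c * r \<le> c * (L' - L - n * lg)"
    "h * gQ \<le> h * Q"
    "h * (- Q2) \<le> h * (K * \<delta> - Q2')"
    "Sm2 = Sm + \<delta>" "mm2 = mm + n"
  shows "A + B \<le> h * (F + K * Sm2 - Q2') + c * (L' - mm2 * lg)"
  using assms by (simp add: algebra_simps)

context
  fixes S :: "(real^'n) set" and f :: "nat \<Rightarrow> real^'n \<Rightarrow> real" and g :: "nat \<Rightarrow> real^'n \<Rightarrow> real^'n"
    and th :: "nat \<Rightarrow> real^'n" and u :: "nat \<Rightarrow> real^'n"
    and \<alpha> \<eta> \<gamma> G D :: real and T :: nat
  assumes alpha: "\<alpha> > 0" and eta: "\<eta> > 0" "\<eta> \<le> \<alpha> / 2" "\<eta> * (8 * G * D) \<le> 1"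
    and gam: "0 < \<gamma>" "\<gamma> < 1" and G: "G > 0" and D: "D \<ge> 1"
    and S: "convex S" and bnd: "\<forall>x\<in>S. norm x \<le> D"
    and fs: "\<forall>t\<in>{1..T}. concave_on S (\<lambda>x. exp (- \<alpha> * f t x)) \<and>
       (\<forall>x\<in>S. (f t has_derivative (\<lambda>h. g t x \<bullet> h)) (at x within S) \<and> norm (g t x) \<le> G)"
    and run: "dons_run S g \<eta> \<gamma> T th"
    and uS: "\<forall>t\<in>{1..T}. u t \<in> S"
begin

lemma th_in: "t \<in> {1..T} \<Longrightarrow> th t \<in> S"
proof (induction t)
  case 0 then show ?case by simp
next
  case (Suc t)
  show ?case
  proof (cases "t = 0")
    case True then show ?thesis using run by (simp add: dons_run_def)
  next
    case False
    then have "t \<in> {1..<T}" using Suc by auto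
    then show ?thesis using run unfolding dons_run_def Let_def by blast
  qed
qed

lemma diam: "x \<in> S \<Longrightarrow> y \<in> S \<Longrightarrow> norm (x - y) \<le> 2 * D"
proof -
  assume "x \<in> S" "y \<in> S"
  then have "norm x \<le> D" "norm y \<le> D" using bnd by auto
  then show ?thesis using norm_triangle_ineq4[of x y] by linarith
qed

lemma curv: "t \<in> {1..T} \<Longrightarrow> x \<in> S \<Longrightarrow> y \<in> S \<Longrightarrow>
   f t x \<ge> f t y + g t y \<bullet> (x - y) + (\<eta>/2) * (g t y \<bullet> (x - y))^2"
  using fs by (intro expconc_curv[OF alpha eta S bnd]) auto

lemma gnorm: "s \<in> {1..T} \<Longrightarrow> norm (g s (th s)) \<le> G"
  using fs th_in by auto

abbreviation "PP t \<equiv> dons_P \<gamma> g th t"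
abbreviation "LL \<equiv> 1 + G^2 / (1 - \<gamma>)"

lemma entry: "t \<le> T \<Longrightarrow> \<bar>PP t $ i $ j\<bar> \<le> LL"
  by (rule dP_entry[OF gam]) (auto intro: gnorm)

lemma LL_ge: "LL \<ge> 1" using gam by simp

lemma step:
  assumes t: "t \<in> {1..<T}"
  shows "f t (th t) - f t (u t) \<le> (\<eta>/2) * (\<gamma> * qf (PP (t - 1)) (th t - u t) - qf (PP t) (th (Suc t) - u t))
     + (1/(2*\<eta>)) * (g t (th t) \<bullet> (matrix_inv (PP t) *v g t (th t)))"
proof -
  let ?v = "g t (th t)"
  let ?d = "?v \<bullet> (th t - u t)"
  let ?r = "?v \<bullet> (matrix_inv (PP t) *v ?v)"
  let ?y = "th t - (1 / \<eta>) *\<^sub>R (matrix_inv (PP t) *v ?v)"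
  have tT: "t \<in> {1..T}" using t by auto
  have thS: "th t \<in> S" and uS': "u t \<in> S" using th_in tT uS by auto
  have c: "f t (u t) \<ge> f t (th t) + ?v \<bullet> (u t - th t) + (\<eta>/2) * (?v \<bullet> (u t - th t))^2"
    by (rule curv[OF tT uS' thS])
  have "?v \<bullet> (u t - th t) = - ?d" by (simp add: inner_diff_right)
  then have c2: "f t (th t) - f t (u t) \<le> ?d - (\<eta>/2) * ?d^2" using c by simp
  have r: "th (Suc t) \<in> S \<and> (\<forall>z\<in>S. qf (PP t) (th (Suc t) - ?y) \<le> qf (PP t) (z - ?y))"
    using run t unfolding dons_run_def Let_def qf_def by blast
  have sym: "\<And>i j. PP t $i$j = PP t $j$i" by (rule dP_sym)
  have "det (PP t) > 0" by (rule dP_det_pos[OF gam(1)])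
  then have inv: "invertible (PP t)" by (simp add: invertible_det_nz)
  have pr: "qf (PP t) (th (Suc t) - u t) \<le> qf (PP t) (?y - u t)"
    using r by (intro proj_lemma[OF sym dP_qf_nonneg[OF gam(1)] S]) (auto simp: uS')
  also have "\<dots> = qf (PP t) (th t - u t) - (2/\<eta>) * ?d + (1/\<eta>^2) * ?r"
    by (rule ons_expand[OF sym inv]) (use eta in simp)
  finally have "?d \<le> (\<eta>/2) * (qf (PP t) (th t - u t) - qf (PP t) (th (Suc t) - u t)) + (1/(2*\<eta>)) * ?r"
    using eta by (simp add: field_simps power2_eq_square)
  moreover have "qf (PP t) (th t - u t) = \<gamma> * qf (PP (t - 1)) (th t - u t) + ?d^2"
  proof -
    have "t = Suc (t - 1)" using t by auto
    then show ?thesis using dP_qf[of \<gamma> g th "t - 1" "th t - u t"] by simp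
  qed
  ultimately show ?thesis using c2 by (simp add: algebra_simps)
qed

lemma qf_shift:
  assumes "m \<le> T" "a \<in> S" "b \<in> S" "c \<in> S"
  shows "qf (PP m) (a - b) \<le> qf (PP m) (a - c) + 4 * D * LL * CARD('n)^2 * norm (c - b)"
proof -
  have sym: "\<And>i j. PP m $i$j = PP m $j$i" by (rule dP_sym)
  have "qf (PP m) (a - b) - qf (PP m) (a - c) = ((a - b) - (a - c)) \<bullet> (PP m *v ((a - b) + (a - c)))"
    by (rule qf_diff[OF sym])
  also have "\<dots> \<le> \<bar>((a - b) - (a - c)) \<bullet> (PP m *v ((a - b) + (a - c)))\<bar>" by simp
  also have "\<dots> \<le> LL * CARD('n)^2 * norm ((a - b) - (a - c)) * norm ((a - b) + (a - c))"
    by (rule bilin_bound) (rule entry[OF assms(1)])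
  also have "\<dots> \<le> LL * CARD('n)^2 * norm (c - b) * (4 * D)"
  proof -
    have "norm ((a - b) + (a - c)) \<le> norm (a - b) + norm (a - c)" by (rule norm_triangle_ineq)
    also have "\<dots> \<le> 4 * D" using diam[OF assms(2) assms(3)] diam[OF assms(2) assms(4)] by linarith
    finally have n4: "norm ((a - b) + (a - c)) \<le> 4 * D" .
    have "(a - b) - (a - c) = c - b" by simp
    then show ?thesis using n4 LL_ge by (simp add: mult_left_mono)
  qed
  finally show ?thesis by (simp add: algebra_simps)
qed

lemma invariant:
  "Suc m \<le> T \<Longrightarrow> (\<Sum>t=1..m. f t (th t) - f t (u t)) \<le>
     (\<eta>/2) * (4 * D^2 + 4 * D * LL * CARD('n)^2 * (\<Sum>t=2..Suc m. norm (u t - u (t - 1)))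
        - qf (PP m) (th (Suc m) - u (Suc m)))
     + (1/(2*\<eta>)) * (ln (det (PP m)) - m * CARD('n) * ln \<gamma>)"
proof (induction m)
  case 0
  have "th 1 \<in> S" "u 1 \<in> S" using th_in uS 0 by auto
  then have "norm (th 1 - u 1) \<le> 2 * D" by (rule diam)
  then have "(norm (th 1 - u 1))^2 \<le> (2 * D)^2" by (intro power_mono) auto
  moreover have "qf (PP 0) (th 1 - u 1) = (norm (th 1 - u 1))^2" by (simp add: qf_def power2_norm_eq_inner)
  ultimately have "qf (PP 0) (th 1 - u 1) \<le> 4 * D^2" by (simp add: power_mult_distrib)
  then show ?case using eta by simp
next
  case (Suc m)
  let ?K = "4 * D * LL * CARD('n)^2"
  have IH: "(\<Sum>t=1..m. f t (th t) - f t (u t)) \<le>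
     (\<eta>/2) * (4 * D^2 + ?K * (\<Sum>t=2..Suc m. norm (u t - u (t - 1))) - qf (PP m) (th (Suc m) - u (Suc m)))
     + (1/(2*\<eta>)) * (ln (det (PP m)) - m * CARD('n) * ln \<gamma>)" using Suc by simp
  have st: "f (Suc m) (th (Suc m)) - f (Suc m) (u (Suc m)) \<le> (\<eta>/2) * (\<gamma> * qf (PP m) (th (Suc m) - u (Suc m))
      - qf (PP (Suc m)) (th (Suc (Suc m)) - u (Suc m)))
     + (1/(2*\<eta>)) * (g (Suc m) (th (Suc m)) \<bullet> (matrix_inv (PP (Suc m)) *v g (Suc m) (th (Suc m))))"
    using step[of "Suc m"] Suc.prems by simp
  have ld: "g (Suc m) (th (Suc m)) \<bullet> (matrix_inv (PP (Suc m)) *v g (Suc m) (th (Suc m)))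
      \<le> ln (det (PP (Suc m))) - ln (det (PP m)) - CARD('n) * ln \<gamma>"
    by (rule dP_logdet[OF gam(1)])
  have q0: "qf (PP m) (th (Suc m) - u (Suc m)) \<ge> 0" by (rule dP_qf_nonneg[OF gam(1)])
  have g1: "\<gamma> * qf (PP m) (th (Suc m) - u (Suc m)) \<le> qf (PP m) (th (Suc m) - u (Suc m))"
    using q0 gam by (simp add: mult_left_le_one_le)
  have sh: "qf (PP (Suc m)) (th (Suc (Suc m)) - u (Suc (Suc m))) \<le> qf (PP (Suc m)) (th (Suc (Suc m)) - u (Suc m))
      + ?K * norm (u (Suc (Suc m)) - u (Suc m))"
    using qf_shift[of "Suc m" "th (Suc (Suc m))" "u (Suc (Suc m))" "u (Suc m)"] Suc.prems th_in uS
    by (auto simp: algebra_simps norm_minus_commute)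
  have sum: "(\<Sum>t=2..Suc (Suc m). norm (u t - u (t - 1))) = (\<Sum>t=2..Suc m. norm (u t - u (t - 1))) + norm (u (Suc (Suc m)) - u (Suc m))"
    by (simp add: sum.cl_ivl_Suc)
  have "(\<Sum>t=1..Suc m. f t (th t) - f t (u t)) = (\<Sum>t=1..m. f t (th t) - f t (u t)) + (f (Suc m) (th (Suc m)) - f (Suc m) (u (Suc m)))"
    by (simp add: sum.cl_ivl_Suc)
  also have "\<dots> \<le> (\<eta>/2) * (4 * D^2 + ?K * (\<Sum>t=2..Suc (Suc m). norm (u t - u (t - 1))) - qf (PP (Suc m)) (th (Suc (Suc m)) - u (Suc (Suc m))))
     + (1/(2*\<eta>)) * (ln (det (PP (Suc m))) - Suc m * CARD('n) * ln \<gamma>)"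
  proof -
    have e1: "(\<eta>/2) * (\<gamma> * qf (PP m) (th (Suc m) - u (Suc m))) \<le> (\<eta>/2) * qf (PP m) (th (Suc m) - u (Suc m))"
      using g1 eta by simp
    have e2: "(\<eta>/2) * (- qf (PP (Suc m)) (th (Suc (Suc m)) - u (Suc m))) \<le> (\<eta>/2) * (?K * norm (u (Suc (Suc m)) - u (Suc m)) - qf (PP (Suc m)) (th (Suc (Suc m)) - u (Suc (Suc m))))"
      using sh eta by (intro mult_left_mono) auto
    have e3: "(1/(2*\<eta>)) * (g (Suc m) (th (Suc m)) \<bullet> (matrix_inv (PP (Suc m)) *v g (Suc m) (th (Suc m))))
       \<le> (1/(2*\<eta>)) * (ln (det (PP (Suc m))) - ln (det (PP m)) - CARD('n) * ln \<gamma>)"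
      using ld eta by (intro mult_left_mono) auto
    show ?thesis
      by (rule arith_step[OF IH st e3 e1 e2]) (simp_all add: sum algebra_simps)
  qed
  finally show ?case .
qed

lemma expert_regret:
  assumes T1: "T \<ge> 1"
  shows "(\<Sum>t=1..T. f t (th t) - f t (u t)) \<le> 2 * G * D
     + (\<eta>/2) * (4 * D^2 + 4 * D * LL * CARD('n)^2 * (\<Sum>t=2..T. norm (u t - u (t - 1))))
     + (1/(2*\<eta>)) * (ln (fact CARD('n) * LL ^ CARD('n)) + T * CARD('n) * (- ln \<gamma>))"
proof -
  obtain m where m: "T = Suc m" using T1 by (cases T) auto
  have inv: "(\<Sum>t=1..m. f t (th t) - f t (u t)) \<le>
     (\<eta>/2) * (4 * D^2 + 4 * D * LL * CARD('n)^2 * (\<Sum>t=2..T. norm (u t - u (t - 1))))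
     + (1/(2*\<eta>)) * (ln (det (PP m)) - m * CARD('n) * ln \<gamma>)"
  proof -
    have q0: "qf (PP m) (th (Suc m) - u (Suc m)) \<ge> 0" by (rule dP_qf_nonneg[OF gam(1)])
    have "Suc m \<le> T" using m by simp
    note I = invariant[OF this]
    show ?thesis using aux_drop[OF I q0] eta unfolding m[symmetric] by simp
  qed
  have last: "f T (th T) - f T (u T) \<le> 2 * G * D"
  proof -
    have tT: "T \<in> {1..T}" using T1 by simp
    have thS: "th T \<in> S" and uS': "u T \<in> S" using th_in tT uS by auto
    have c: "f T (u T) \<ge> f T (th T) + g T (th T) \<bullet> (u T - th T) + (\<eta>/2) * (g T (th T) \<bullet> (u T - th T))^2"
      by (rule curv[OF tT uS' thS])
    have "(\<eta>/2) * (g T (th T) \<bullet> (u T - th T))^2 \<ge> 0" using eta by simp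
    then have "f T (th T) - f T (u T) \<le> - (g T (th T) \<bullet> (u T - th T))" using c by simp
    also have "\<dots> \<le> norm (g T (th T)) * norm (u T - th T)"
      using Cauchy_Schwarz_ineq2[of "g T (th T)" "u T - th T"] by simp
    also have "\<dots> \<le> G * (2 * D)"
      by (intro mult_mono gnorm[OF tT] diam[OF uS' thS]) (use G in auto)
    finally show ?thesis by simp
  qed
  have ldet: "ln (det (PP m)) \<le> ln (fact CARD('n) * LL ^ CARD('n))"
  proof -
    have "det (PP m) \<le> fact CARD('n) * LL ^ CARD('n)"
      by (rule det_bound[OF _ LL_ge]) (rule entry, use m in simp)
    moreover have "det (PP m) > 0" by (rule dP_det_pos[OF gam(1)])
    ultimately show ?thesis by (subst ln_le_cancel_iff) auto
  qed
  have lg: "- (m * CARD('n) * ln \<gamma>) \<le> T * CARD('n) * (- ln \<gamma>)"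
  proof -
    have "ln \<gamma> \<le> 0" using gam by simp
    then show ?thesis using m by (simp add: mult_nonpos_nonneg mult_le_cancel_right algebra_simps)
  qed
  have "(\<Sum>t=1..T. f t (th t) - f t (u t)) = (\<Sum>t=1..m. f t (th t) - f t (u t)) + (f T (th T) - f T (u T))"
    using m by (simp add: sum.cl_ivl_Suc)
  also have "\<dots> \<le> (\<eta>/2) * (4 * D^2 + 4 * D * LL * CARD('n)^2 * (\<Sum>t=2..T. norm (u t - u (t - 1))))
     + (1/(2*\<eta>)) * (ln (det (PP m)) - m * CARD('n) * ln \<gamma>) + 2 * G * D"
    using inv last by simp
  also have "\<dots> \<le> (\<eta>/2) * (4 * D^2 + 4 * D * LL * CARD('n)^2 * (\<Sum>t=2..T. norm (u t - u (t - 1))))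
     + (1/(2*\<eta>)) * (ln (fact CARD('n) * LL ^ CARD('n)) + T * CARD('n) * (- ln \<gamma>)) + 2 * G * D"
  proof -
    have X: "ln (det (PP m)) - m * CARD('n) * ln \<gamma> \<le> ln (fact CARD('n) * LL ^ CARD('n)) + T * CARD('n) * (- ln \<gamma>)"
      using ldet lg by linarith
    have "(1/(2*\<eta>)) * (ln (det (PP m)) - m * CARD('n) * ln \<gamma>) \<le> (1/(2*\<eta>)) * (ln (fact CARD('n) * LL ^ CARD('n)) + T * CARD('n) * (- ln \<gamma>))"
      using X eta by (intro mult_left_mono) auto
    then show ?thesis by linarith
  qed
  finally show ?thesis by simp
qed

end

lemma sum_telesc_inv: "(\<Sum>j=1..N. 1 / (real j * (real j + 1))) = real N / (real N + 1)"
proof (induction N)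
  case 0 then show ?case by simp
next
  case (Suc N)
  have "(\<Sum>j=1..Suc N. 1 / (real j * (real j + 1))) = real N / (real N + 1) + 1 / ((real N + 1) * (real N + 2))"
    using Suc by (simp add: sum.cl_ivl_Suc add.commute)
  also have "\<dots> = (real N + 1) / (real N + 2)"
  proof -
    have p: "real N + 1 \<noteq> 0" "real N + 2 \<noteq> 0" by linarith+
    show ?thesis
      apply (simp add: divide_simps p)
      apply (simp add: algebra_simps power2_eq_square)
      done
  qed
  also have "\<dots> = real (Suc N) / (real (Suc N) + 1)" by (simp add: add.commute)
  finally show ?case .
qed

definition w0 :: "nat \<Rightarrow> nat \<Rightarrow> real" where
  "w0 N i = (1 + 1 / real N) / (real i * (real i + 1))"

lemma sum_w0: "N \<ge> 1 \<Longrightarrow> (\<Sum>j=1..N. w0 N j) = 1"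
proof -
  assume N: "N \<ge> 1"
  have "(\<Sum>j=1..N. w0 N j) = (1 + 1 / real N) * (\<Sum>j=1..N. 1 / (real j * (real j + 1)))"
    by (simp add: w0_def sum_distrib_left)
  also have "\<dots> = 1"
  proof -
    have "real N > 0" using N by simp
    then have "real N + real N * real N > 0" by (simp add: add_pos_pos)
    then show ?thesis using N by (simp only: sum_telesc_inv) (simp add: field_simps)
  qed
  finally show ?thesis .
qed

lemma w0_pos: "i \<ge> 1 \<Longrightarrow> w0 N i > 0"
  by (simp add: w0_def add_pos_nonneg)

definition LL_i :: "(nat \<Rightarrow> real^'n \<Rightarrow> real) \<Rightarrow> (nat \<Rightarrow> nat \<Rightarrow> real^'n) \<Rightarrow> nat \<Rightarrow> nat \<Rightarrow> real" where
  "LL_i f ths i t = (\<Sum>s=1..t. f s (ths i s))"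

definition WW :: "real \<Rightarrow> nat \<Rightarrow> (nat \<Rightarrow> real^'n \<Rightarrow> real) \<Rightarrow> (nat \<Rightarrow> nat \<Rightarrow> real^'n) \<Rightarrow> nat \<Rightarrow> real" where
  "WW lam N f ths t = (\<Sum>j=1..N. w0 N j * exp (- lam * LL_i f ths j t))"

lemma WW_pos: "N \<ge> 1 \<Longrightarrow> WW lam N f ths t > 0"
  unfolding WW_def by (rule sum_pos) (auto intro!: mult_pos_pos w0_pos)

lemma LL_Suc: "LL_i f ths i (Suc t) = LL_i f ths i t + f (Suc t) (ths i (Suc t))"
  by (simp add: LL_i_def sum.cl_ivl_Suc)

lemma mix_w_formula:
  assumes N: "N \<ge> 1"
  shows "mix_w lam N f ths t i = w0 N i * exp (- lam * LL_i f ths i t) / WW lam N f ths t"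
proof (induction t arbitrary: i)
  case 0
  have "WW lam N f ths 0 = 1" using sum_w0[OF N] by (simp add: WW_def LL_i_def)
  then show ?case by (simp add: w0_def LL_i_def)
next
  case (Suc t)
  let ?e = "\<lambda>j. exp (- lam * f (Suc t) (ths j (Suc t)))"
  let ?W = "WW lam N f ths t"
  have Wp: "?W > 0" by (rule WW_pos[OF N])
  have ex: "exp (- lam * LL_i f ths j (Suc t)) = exp (- lam * LL_i f ths j t) * ?e j" for j
    by (simp add: LL_Suc algebra_simps mult_exp_exp)
  have den: "(\<Sum>j=1..N. mix_w lam N f ths t j * ?e j) = WW lam N f ths (Suc t) / ?W"
    unfolding Suc WW_def ex by (simp add: sum_divide_distrib sum_distrib_right mult_ac)
  have "mix_w lam N f ths (Suc t) i = (w0 N i * exp (- lam * LL_i f ths i t) / ?W) * ?e i / (WW lam N f ths (Suc t) / ?W)"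
    by (subst mix_w.simps, subst den, subst Suc, rule refl)
  also have "\<dots> = w0 N i * exp (- lam * LL_i f ths i (Suc t)) / WW lam N f ths (Suc t)"
    using Wp unfolding ex by (simp add: field_simps)
  finally show ?case .
qed

lemma mix_w_nonneg: "N \<ge> 1 \<Longrightarrow> i \<ge> 1 \<Longrightarrow> mix_w lam N f ths t i \<ge> 0"
  using mix_w_formula[of N lam f ths t i] WW_pos[of N lam f ths t] w0_pos[of i N] by simp

lemma mix_w_sum: "N \<ge> 1 \<Longrightarrow> (\<Sum>i=1..N. mix_w lam N f ths t i) = 1"
  using WW_pos[of N lam f ths t]
  by (simp add: mix_w_formula WW_def flip: sum_divide_distrib)

lemma mix_in:
  assumes "N \<ge> 1" "convex S" "\<forall>i\<in>{1..N}. ths i t \<in> S"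
  shows "mix_play lam N f ths t \<in> S"
  unfolding mix_play_def
  by (rule convex_sum) (use assms mix_w_sum[OF assms(1)] in \<open>auto intro: mix_w_nonneg\<close>)

lemma mix_exp:
  assumes N: "N \<ge> 1" and alpha: "\<alpha> > 0" and S: "convex S"
    and conc: "\<forall>t\<in>{1..T}. concave_on S (\<lambda>x. exp (- \<alpha> * f t x))"
    and thS: "\<forall>i\<in>{1..N}. \<forall>t\<in>{1..T}. ths i t \<in> S"
  shows "m \<le> T \<Longrightarrow> exp (- \<alpha> * (\<Sum>t=1..m. f t (mix_play \<alpha> N f ths t))) \<ge> WW \<alpha> N f ths m"
proof (induction m)
  case 0
  have "WW \<alpha> N f ths 0 = 1" using sum_w0[OF N] by (simp add: WW_def LL_i_def)
  then show ?case by simp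
next
  case (Suc m)
  let ?W = "WW \<alpha> N f ths m"
  let ?e = "\<lambda>j. exp (- \<alpha> * f (Suc m) (ths j (Suc m)))"
  have Wp: "?W > 0" by (rule WW_pos[OF N])
  have tT: "Suc m \<in> {1..T}" using Suc by auto
  have jen: "(\<lambda>x. - exp (- \<alpha> * f (Suc m) x)) (\<Sum>i\<in>{1..N}. mix_w \<alpha> N f ths m i *\<^sub>R ths i (Suc m))
      \<le> (\<Sum>i\<in>{1..N}. mix_w \<alpha> N f ths m i * (\<lambda>x. - exp (- \<alpha> * f (Suc m) x)) (ths i (Suc m)))"
    by (rule convex_on_sum) (use N conc tT thS mix_w_sum[OF N] mix_w_nonneg[OF N] in \<open>auto simp: concave_on_def\<close>)
  have ex: "exp (- \<alpha> * LL_i f ths j (Suc m)) = exp (- \<alpha> * LL_i f ths j m) * ?e j" for j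
    by (simp add: LL_Suc algebra_simps mult_exp_exp)
  have "(\<Sum>i\<in>{1..N}. mix_w \<alpha> N f ths m i * ?e i) = WW \<alpha> N f ths (Suc m) / ?W"
    unfolding mix_w_formula[OF N] WW_def ex by (simp add: sum_divide_distrib sum_distrib_right mult_ac)
  then have e1: "exp (- \<alpha> * f (Suc m) (mix_play \<alpha> N f ths (Suc m))) \<ge> WW \<alpha> N f ths (Suc m) / ?W"
    using jen by (simp add: mix_play_def sum_negf)
  have "exp (- \<alpha> * (\<Sum>t=1..Suc m. f t (mix_play \<alpha> N f ths t)))
      = exp (- \<alpha> * (\<Sum>t=1..m. f t (mix_play \<alpha> N f ths t))) * exp (- \<alpha> * f (Suc m) (mix_play \<alpha> N f ths (Suc m)))"
    by (simp add: sum.cl_ivl_Suc algebra_simps mult_exp_exp)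
  also have "\<dots> \<ge> ?W * (WW \<alpha> N f ths (Suc m) / ?W)"
    using Suc e1 Wp WW_pos[OF N, of \<alpha> f ths "Suc m"] by (intro mult_mono) (auto intro: less_imp_le)
  finally show ?case using Wp by simp
qed

lemma mix_regret:
  assumes N: "N \<ge> 1" and alpha: "\<alpha> > 0" and S: "convex S"
    and conc: "\<forall>t\<in>{1..T}. concave_on S (\<lambda>x. exp (- \<alpha> * f t x))"
    and thS: "\<forall>i\<in>{1..N}. \<forall>t\<in>{1..T}. ths i t \<in> S"
    and i: "i \<in> {1..N}"
  shows "(\<Sum>t=1..T. f t (mix_play \<alpha> N f ths t)) \<le> (\<Sum>t=1..T. f t (ths i t)) + (2 / \<alpha>) * ln (real N + 1)"
proof -
  let ?X = "\<Sum>t=1..T. f t (mix_play \<alpha> N f ths t)"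
  have w: "WW \<alpha> N f ths T \<ge> w0 N i * exp (- \<alpha> * LL_i f ths i T)"
    unfolding WW_def
    by (rule member_le_sum) (use i w0_pos in \<open>auto intro!: mult_nonneg_nonneg less_imp_le\<close>)
  have wp: "w0 N i * exp (- \<alpha> * LL_i f ths i T) > 0" using w0_pos i by simp
  have "exp (- \<alpha> * ?X) \<ge> w0 N i * exp (- \<alpha> * LL_i f ths i T)"
    using mix_exp[OF N alpha S conc thS order_refl] w by simp
  then have "- \<alpha> * ?X \<ge> ln (w0 N i * exp (- \<alpha> * LL_i f ths i T))"
    using wp by (metis exp_le_cancel_iff exp_ln)
  also have "ln (w0 N i * exp (- \<alpha> * LL_i f ths i T)) = ln (w0 N i) - \<alpha> * LL_i f ths i T"
  proof -
    have "w0 N i > 0" using w0_pos i by auto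
    then show ?thesis by (simp add: ln_mult)
  qed
  finally have X: "?X \<le> LL_i f ths i T - ln (w0 N i) / \<alpha>" using alpha by (simp add: field_simps)
  have "- ln (w0 N i) \<le> 2 * ln (real N + 1)"
  proof -
    have i1: "real i \<ge> 1" "real i \<le> real N" using i by auto
    have a: "1 + 1 / real N > 0" using N by (simp add: add_pos_nonneg)
    have b: "real i * (real i + 1) > 0" using i1 by simp
    have "- ln (w0 N i) = ln (real i * (real i + 1)) - ln (1 + 1 / real N)"
      unfolding w0_def using a b i1 by (simp add: ln_div)
    also have "\<dots> \<le> ln (real i * (real i + 1))" using N by simp
    also have "\<dots> \<le> ln ((real N + 1) * (real N + 1))" using i1 by (intro ln_mono mult_mono) auto
    also have "\<dots> = 2 * ln (real N + 1)" by (simp add: ln_mult)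
    finally show ?thesis .
  qed
  then have "(- ln (w0 N i)) / \<alpha> \<le> (2 * ln (real N + 1)) / \<alpha>" using alpha by (intro divide_right_mono) auto
  then have "- ln (w0 N i) / \<alpha> \<le> (2 / \<alpha>) * ln (real N + 1)" by simp
  then show ?thesis using X by (simp add: LL_i_def)
qed

lemma run_in: "dons_run S g \<eta> \<gamma> T th \<Longrightarrow> t \<in> {1..T} \<Longrightarrow> th t \<in> S"
proof (induction t)
  case 0 then show ?case by simp
next
  case (Suc t)
  show ?case
  proof (cases "t = 0")
    case True then show ?thesis using Suc by (simp add: dons_run_def)
  next
    case False
    then have "t \<in> {1..<T}" using Suc by auto
    then show ?thesis using Suc(2) unfolding dons_run_def Let_def by blast
  qed
qed

definition aa :: "nat \<Rightarrow> real \<Rightarrow> real" where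
  "aa T D = ln (real T) / (real T * sqrt (2 * D))"

lemma aa_pos: "T \<ge> 2 \<Longrightarrow> D \<ge> 1 \<Longrightarrow> aa T D > 0"
  unfolding aa_def by (intro divide_pos_pos mult_pos_pos) auto

lemma aa_lt1: assumes "T \<ge> 2" "D \<ge> 1" shows "aa T D < 1"
proof -
  have T: "real T > 0" using assms by simp
  have "ln (real T) < real T" using T by (rule ln_less_self)
  also have "\<dots> \<le> real T * sqrt (2 * D)" using T assms by simp
  finally show ?thesis unfolding aa_def using T assms by (simp add: divide_less_eq)
qed

lemma eta_eq: "dons_eta T D i = aa T D / 2 * 2 ^ (i - 1)"
  by (simp add: dons_eta_def aa_def)

lemma etaN:
  assumes T: "T \<ge> 2" and D: "D \<ge> 1"
  shows "dons_eta T D (dons_N T D) \<ge> 1/2"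
proof -
  let ?a = "aa T D"
  let ?X = "2 * D * (real T)^2 / (ln (real T))^2"
  let ?c = "(1/2) * log 2 ?X"
  define k where "k = nat \<lceil>?c\<rceil>"
  have a: "?a > 0" "?a < 1" using aa_pos aa_lt1 T D by auto
  have lT: "ln (real T) > 0" using T by simp
  have X: "?X = (1 / ?a)^2"
    unfolding aa_def using lT T D by (simp add: power_divide power_mult_distrib field_simps)
  have Xp: "?X > 0" using X a by simp
  have kc: "real k \<ge> ?c" unfolding k_def by linarith
  have h: "2 powr (log 2 ?X) \<le> 2 powr (real (2 * k))" using kc by (intro powr_mono) auto
  have e: "(2::real) powr (real (2*k)) = 2^(2*k)" by (rule powr_realpow) simp
  have e2: "(2::real) powr (log 2 ?X) = ?X" using Xp by simp
  have "?X \<le> 2 ^ (2 * k)" using h unfolding e e2 .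
  then have "(1 / ?a)^2 \<le> (2 ^ k)^2" unfolding X by (simp add: power_mult[symmetric] mult.commute)
  then have k2: "1 / ?a \<le> 2 ^ k" by (rule power2_le_imp_le) simp
  have "dons_N T D - 1 = k" by (simp add: dons_N_def k_def)
  then have "dons_eta T D (dons_N T D) = ?a / 2 * 2 ^ k" by (simp add: eta_eq)
  also have "\<dots> \<ge> ?a / 2 * (1 / ?a)" using k2 a by (intro mult_left_mono) auto
  finally show ?thesis using a by simp
qed

lemma N_bound:
  assumes T: "T \<ge> 2" and D: "D \<ge> 1"
  shows "real (dons_N T D) \<le> 2 + (1/2) * log 2 (2 * D / (ln 2)^2) + ln (real T) / ln 2"
proof -
  let ?X = "2 * D * (real T)^2 / (ln (real T))^2"
  let ?c = "(1/2) * log 2 ?X"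
  have lT: "ln (real T) \<ge> ln 2" using T by simp
  have l2: "ln (2::real) > 0" by simp
  have Xp: "?X > 0" using T D by simp
  have "?X \<le> 2 * D * (real T)^2 / (ln 2)^2"
    using lT l2 T D by (intro divide_left_mono power_mono mult_pos_pos) auto
  also have "\<dots> = (2 * D / (ln 2)^2) * (real T)^2" by simp
  finally have Xle: "?X \<le> (2 * D / (ln 2)^2) * (real T)^2" .
  have "log 2 ?X \<le> log 2 ((2 * D / (ln 2)^2) * (real T)^2)" using Xp Xle by simp
  also have "\<dots> = log 2 (2 * D / (ln 2)^2) + log 2 ((real T)^2)"
    by (rule log_mult_pos) (use T D in auto)
  also have "log 2 ((real T)^2) = 2 * log 2 (real T)" by (simp add: log_nat_power)
  finally have c: "?c \<le> (1/2) * log 2 (2 * D / (ln 2)^2) + log 2 (real T)" by simp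
  have c0: "?c \<ge> 0"
  proof -
    have "?X = (1 / aa T D)^2"
      unfolding aa_def using T D by (simp add: power_divide power_mult_distrib field_simps)
    moreover have "1 / aa T D > 1" using aa_pos aa_lt1 T D by simp
    ultimately have "?X \<ge> 1" by (simp add: one_le_power)
    then show ?thesis by simp
  qed
  have "real (dons_N T D) = real (nat \<lceil>?c\<rceil>) + 1" by (simp add: dons_N_def)
  also have "\<dots> \<le> ?c + 2" using c0 by linarith
  also have "\<dots> \<le> 2 + (1/2) * log 2 (2 * D / (ln 2)^2) + ln (real T) / ln 2"
    using c by (simp add: log_def)
  finally show ?thesis .
qed

lemma ln_eta1:
  assumes T: "T \<ge> 2" and D: "D \<ge> 1" and G: "G > 0"
  shows "ln (1 + G^2 / dons_eta T D 1) \<le> ln (1 + 2 * G^2 * sqrt (2 * D) / ln 2) + ln (real T)"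
proof -
  have lT: "ln (real T) \<ge> ln 2" using T by simp
  have l2: "ln (2::real) > 0" by simp
  have Tp: "real T \<ge> 1" using T by simp
  have e1: "dons_eta T D 1 = ln (real T) / (2 * real T * sqrt (2 * D))" by (simp add: dons_eta_def)
  have "G^2 / dons_eta T D 1 = 2 * G^2 * sqrt (2 * D) * real T / ln (real T)"
    unfolding e1 using T D by (simp add: field_simps)
  also have "\<dots> \<le> 2 * G^2 * sqrt (2 * D) * real T / ln 2"
    using lT l2 T D G by (intro divide_left_mono) auto
  finally have "1 + G^2 / dons_eta T D 1 \<le> 1 + 2 * G^2 * sqrt (2 * D) / ln 2 * real T" by simp
  also have "\<dots> \<le> (1 + 2 * G^2 * sqrt (2 * D) / ln 2) * real T" using Tp by (simp add: algebra_simps)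
  finally have le: "1 + G^2 / dons_eta T D 1 \<le> (1 + 2 * G^2 * sqrt (2 * D) / ln 2) * real T" .
  have pos: "1 + G^2 / dons_eta T D 1 > 0" using T D unfolding e1 by (simp add: add_pos_nonneg)
  have "ln (1 + G^2 / dons_eta T D 1) \<le> ln ((1 + 2 * G^2 * sqrt (2 * D) / ln 2) * real T)"
    using pos le by simp
  also have "\<dots> = ln (1 + 2 * G^2 * sqrt (2 * D) / ln 2) + ln (real T)"
  proof -
    have K: "1 + 2 * G^2 * sqrt (2 * D) / ln 2 > 0" using D by (simp add: add_pos_nonneg)
    show ?thesis using K T by (simp add: ln_mult)
  qed
  finally show ?thesis .
qed

lemma neg_ln_1m:
  fixes x :: real
  assumes a: "0 \<le> x" "x \<le> 1/2"
  shows "- ln (1 - x) \<le> 2 * x"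
proof -
  have "- x - 2 * x^2 \<le> ln (1 - x)" using ln_one_minus_pos_lower_bound[OF a] .
  moreover have "x * x \<le> x * (1/2)" using a by (intro mult_left_mono) auto
  then have "2 * x^2 \<le> x" by (simp add: power2_eq_square)
  ultimately show ?thesis by linarith
qed

lemma main_bound:
  fixes \<alpha> G D \<eta> :: real and S :: "(real^'n) set" and f :: "nat \<Rightarrow> real^'n \<Rightarrow> real"
    and g :: "nat \<Rightarrow> real^'n \<Rightarrow> real^'n" and ths :: "nat \<Rightarrow> nat \<Rightarrow> real^'n"
    and z :: "nat \<Rightarrow> real^'n" and V :: real and T :: nat
  assumes alpha: "\<alpha> > 0" and G: "G > 0" and D: "D \<ge> 1" and eta: "\<eta> > 0"
    and etab: "\<eta> \<le> (1/2) * min (1 / (4 * G * D)) \<alpha>"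
    and T: "T \<ge> 2" and S: "convex S" and bnd: "\<forall>x\<in>S. norm x \<le> D"
    and fs: "\<forall>t\<in>{1..T}. convex_on S (f t) \<and> concave_on S (\<lambda>x. exp (- \<alpha> * f t x)) \<and>
       (\<forall>x\<in>S. (f t has_derivative (\<lambda>h. g t x \<bullet> h)) (at x within S) \<and> norm (g t x) \<le> G)"
    and runs: "\<forall>i\<in>{1..dons_N T D}. dons_run S g \<eta> (dons_gamma T D i) T (ths i)"
    and zS: "\<forall>t\<in>{1..T}. z t \<in> S" and Vb: "(\<Sum>t=2..T. norm (z t - z (t - 1))) \<le> V"
  shows "(\<Sum>t=1..T. f t (mix_play \<alpha> (dons_N T D) f ths t) - f t (z t))
     \<le> ((2 * G * D + 2 * \<eta> * D^2 + (1/(2*\<eta>)) * (ln (fact CARD('n)) + CARD('n) * ln (1 + 2 * G^2 * sqrt (2 * D) / ln 2))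
          + (2/\<alpha>) * \<bar>2 + (1/2) * log 2 (2 * D / (ln 2)^2)\<bar>) / ln 2
        + 2 * \<eta> * D * CARD('n)^2 * (1 + 2 * G^2) + (1/(2*\<eta>)) * (3 * CARD('n)) + (2/\<alpha>) / ln 2
        + 8 * G * D) * max (ln (real T)) (sqrt (real T * V))"
proof -
  let ?N = "dons_N T D"
  let ?n = "real CARD('n)"
  let ?M = "max (ln (real T)) (sqrt (real T * V))"
  let ?th = "\<lambda>t. mix_play \<alpha> ?N f ths t"
  let ?K3 = "1 + 2 * G^2 * sqrt (2 * D) / ln 2"
  let ?B0 = "2 * G * D + 2 * \<eta> * D^2 + (1/(2*\<eta>)) * (ln (fact CARD('n)) + CARD('n) * ln ?K3)
          + (2/\<alpha>) * \<bar>2 + (1/2) * log 2 (2 * D / (ln 2)^2)\<bar>"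
  let ?B1 = "2 * \<eta> * D * CARD('n)^2 * (1 + 2 * G^2) + (1/(2*\<eta>)) * (3 * CARD('n)) + (2/\<alpha>) / ln 2"
  have eta2: "\<eta> \<le> \<alpha> / 2" "\<eta> * (8 * G * D) \<le> 1"
  proof -
    show "\<eta> \<le> \<alpha> / 2" using etab by simp
    have "\<eta> \<le> (1/2) * (1 / (4 * G * D))" using etab by simp
    then show "\<eta> * (8 * G * D) \<le> 1" using G D by (simp add: field_simps)
  qed
  have N1: "?N \<ge> 1" by (simp add: dons_N_def)
  have lT: "ln (real T) \<ge> ln 2" using T by simp
  have l2: "ln (2::real) > 0" by simp
  have Tp: "real T \<ge> 2" using T by simp
  have V0: "V \<ge> 0" using Vb sum_nonneg[of "{2..T}" "\<lambda>t. norm (z t - z (t - 1))"] by simp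
  have M1: "ln (real T) \<le> ?M" and M2: "sqrt (real T * V) \<le> ?M" by auto
  have Mpos: "?M \<ge> ln 2" using lT M1 by linarith
  have M0: "?M \<ge> 0" using Mpos l2 by linarith
  have thS: "\<forall>i\<in>{1..?N}. \<forall>t\<in>{1..T}. ths i t \<in> S" using runs run_in by blast
  have conc: "\<forall>t\<in>{1..T}. concave_on S (\<lambda>x. exp (- \<alpha> * f t x))" using fs by auto
  have playS: "?th t \<in> S" if "t \<in> {1..T}" for t
    using thS that by (intro mix_in[OF N1 S]) auto
  have curv: "f t x \<ge> f t y + g t y \<bullet> (x - y) + (\<eta>/2) * (g t y \<bullet> (x - y))^2"
    if "t \<in> {1..T}" "x \<in> S" "y \<in> S" for t x y
    using fs that by (intro expconc_curv[OF alpha eta eta2 S bnd]) auto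
  have diam: "norm (x - y) \<le> 2 * D" if "x \<in> S" "y \<in> S" for x y
  proof -
    have "norm x \<le> D" "norm y \<le> D" using bnd that by auto
    then show ?thesis using norm_triangle_ineq4[of x y] by linarith
  qed
  have sumsplit: "(\<Sum>t=1..T. f t (?th t) - f t (z t)) = (\<Sum>t=1..T. f t (?th t)) - (\<Sum>t=1..T. f t (z t))"
    by (simp add: sum_subtractf)
  have B0: "?B0 \<ge> 0"
  proof -
    have "ln ?K3 \<ge> 0" using D by (simp add: add_pos_nonneg)
    moreover have "ln (fact CARD('n)) \<ge> (0::real)" by simp
    ultimately show ?thesis using G D eta alpha by (intro add_nonneg_nonneg mult_nonneg_nonneg) auto
  qed
  have B1: "?B1 \<ge> 0" using G D eta alpha by (intro add_nonneg_nonneg mult_nonneg_nonneg) auto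
  have fin: "X \<le> ?B0 + ?B1 * ?M \<Longrightarrow> X \<le> (?B0 / ln 2 + ?B1 + 8 * G * D) * ?M" for X
  proof -
    assume X: "X \<le> ?B0 + ?B1 * ?M"
    have "?B0 = (?B0 / ln 2) * ln 2" by simp
    also have "\<dots> \<le> (?B0 / ln 2) * ?M" using B0 Mpos by (intro mult_left_mono) auto
    finally have "?B0 \<le> (?B0 / ln 2) * ?M" .
    moreover have "0 \<le> ?M" using Mpos l2 by linarith
    then have "0 \<le> 8 * G * D * ?M" using G D by (intro mult_nonneg_nonneg) auto
    ultimately show ?thesis using X by (simp add: algebra_simps)
  qed
  define s where "s = sqrt (real T * V) / real T"
  have s0: "s \<ge> 0" using V0 Tp by (simp add: s_def)
  have Ts: "real T * s = sqrt (real T * V)" using Tp by (simp add: s_def)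
  have Vs: "V = real T * s^2"
  proof -
    have "(real T * s)^2 = real T * V" unfolding Ts using V0 Tp by simp
    then show ?thesis using Tp by (simp add: power2_eq_square field_simps)
  qed
  show ?thesis
  proof (cases "s \<ge> 1/4")
    case True
    have "(\<Sum>t=1..T. f t (?th t) - f t (z t)) \<le> (\<Sum>t=1..T. 2 * G * D)"
    proof (rule sum_mono)
      fix t assume t: "t \<in> {1..T}"
      have c: "f t (z t) \<ge> f t (?th t) + g t (?th t) \<bullet> (z t - ?th t) + (\<eta>/2) * (g t (?th t) \<bullet> (z t - ?th t))^2"
        using curv t zS playS by auto
      have "- (g t (?th t) \<bullet> (z t - ?th t)) \<le> norm (g t (?th t)) * norm (z t - ?th t)"
        using Cauchy_Schwarz_ineq2[of "g t (?th t)" "z t - ?th t"] by simp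
      also have "\<dots> \<le> G * (2 * D)"
        using fs t playS zS diam G by (intro mult_mono) auto
      finally have d: "- (g t (?th t) \<bullet> (z t - ?th t)) \<le> G * (2 * D)" .
      have "(\<eta>/2) * (g t (?th t) \<bullet> (z t - ?th t))^2 \<ge> 0" using eta by simp
      then show "f t (?th t) - f t (z t) \<le> 2 * G * D" using c d by linarith
    qed
    also have "\<dots> = real T * (2 * G * D)" by simp
    also have "\<dots> \<le> (4 * sqrt (real T * V)) * (2 * G * D)"
    proof -
      have "real T \<le> 4 * (real T * s)" using True Tp by simp
      then show ?thesis unfolding Ts using G D by (intro mult_right_mono) auto
    qed
    also have "\<dots> \<le> 8 * G * D * ?M" using M2 G D by (simp add: mult_left_mono)
    also have "\<dots> \<le> ?B0 + ?B1 * ?M + 8 * G * D * ?M"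
    proof -
      have "0 \<le> ?M" using Mpos l2 by linarith
      then have "0 \<le> ?B1 * ?M" using B1 by simp
      then show ?thesis using B0 by linarith
    qed
    finally have X: "(\<Sum>t=1..T. f t (?th t) - f t (z t)) \<le> ?B0 + ?B1 * ?M + 8 * G * D * ?M" .
    have "?B0 \<le> (?B0 / ln 2) * ?M"
    proof -
      have "?B0 = (?B0 / ln 2) * ln 2" by simp
      also have "\<dots> \<le> (?B0 / ln 2) * ?M" using B0 Mpos by (intro mult_left_mono) auto
      finally show ?thesis .
    qed
    then show ?thesis using X by (simp add: algebra_simps)
  next
    case False
    then have s4: "s < 1/4" by simp
    obtain i where i: "i \<in> {1..?N}" and ei1: "dons_eta T D 1 \<le> dons_eta T D i"
      and ei2: "dons_eta T D i \<le> 1/2"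
      and eV: "(1 + G^2 / dons_eta T D i) * V \<le> (1 + 2 * G^2) * ?M"
      and eT: "real T * dons_eta T D i \<le> ?M"
    proof (cases "s \<le> dons_eta T D 1")
      case True
      let ?e = "dons_eta T D 1"
      have e1: "?e = ln (real T) / (2 * real T * sqrt (2 * D))" by (simp add: dons_eta_def)
      have ep: "?e > 0" unfolding e1 using T D by (intro divide_pos_pos mult_pos_pos) auto
      have Te: "real T * ?e \<le> ln (real T)"
      proof -
        have "real T * ?e = ln (real T) / (2 * sqrt (2 * D))" unfolding e1 using Tp by simp
        also have "\<dots> \<le> ln (real T) / 1"
        proof (intro divide_left_mono)
          have "1 \<le> sqrt (2 * D)" by (rule real_le_rsqrt) (use D in simp)
          then show "1 \<le> 2 * sqrt (2 * D)" by linarith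
          show "0 \<le> ln (real T)" using lT l2 by linarith
        qed (use D in simp)
        finally show ?thesis by simp
      qed
      have e_le: "?e \<le> 1/2"
      proof -
        have "?e = aa T D / 2" by (simp add: eta_eq)
        then show ?thesis using aa_lt1[OF T D] by simp
      qed
      have "V \<le> real T * ?e^2" unfolding Vs using True s0 Tp by (intro mult_left_mono power_mono) auto
      moreover have "real T * ?e^2 \<le> real T * ?e"
      proof -
        have "?e * ?e \<le> ?e * 1" using ep e_le by (intro mult_left_mono) auto
        then have "?e^2 \<le> ?e" by (simp add: power2_eq_square)
        then show ?thesis using Tp by (intro mult_left_mono) auto
      qed
      ultimately have V1: "V \<le> real T * ?e" by linarith
      have V2: "V / ?e \<le> real T * ?e"
        using \<open>V \<le> real T * ?e^2\<close> ep by (simp add: divide_le_eq power2_eq_square mult.assoc)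
      have "(1 + G^2 / ?e) * V = V + G^2 * (V / ?e)" by (simp add: algebra_simps)
      also have "\<dots> \<le> real T * ?e + G^2 * (real T * ?e)" using V1 V2 by (intro add_mono mult_left_mono) auto
      also have "\<dots> \<le> ?M + G^2 * ?M" using Te M1 by (intro add_mono mult_left_mono) auto
      also have "\<dots> \<le> (1 + 2 * G^2) * ?M"
        using mult_nonneg_nonneg[OF zero_le_power2[of G] M0] by (simp add: algebra_simps)
      finally have "(1 + G^2 / ?e) * V \<le> (1 + 2 * G^2) * ?M" .
      then show ?thesis using that[of 1] N1 e_le Te M1 by auto
    next
      case False
      let ?I = "{i \<in> {1..?N}. dons_eta T D i \<le> s}"
      have fI: "finite ?I" by simp
      have I1: "1 \<in> ?I" using False N1 by simp
      define i where "i = Max ?I"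
      have iI: "i \<in> ?I" unfolding i_def using fI I1 by (intro Max_in) auto
      have imax: "\<And>j. j \<in> ?I \<Longrightarrow> j \<le> i" unfolding i_def using fI by simp
      have i1: "i \<ge> 1" "i \<le> ?N" and eis: "dons_eta T D i \<le> s" using iI by auto
      have iN: "i \<noteq> ?N" using etaN[OF T D] eis s4 by auto
      have "Suc i \<notin> ?I" using imax by fastforce
      then have "dons_eta T D (Suc i) > s" using i1 iN by auto
      moreover have "dons_eta T D (Suc i) = 2 * dons_eta T D i"
      proof -
        have "(2::real) ^ (Suc i - 1) = 2 * 2 ^ (i - 1)" using i1 by (cases i) auto
        then show ?thesis by (simp add: eta_eq)
      qed
      ultimately have s2: "s < 2 * dons_eta T D i" by simp
      have ep: "dons_eta T D i > 0"
        unfolding eta_eq using aa_pos[OF T D] by simp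
      have mono: "dons_eta T D 1 \<le> dons_eta T D i"
        unfolding eta_eq using aa_pos[OF T D] i1 by simp
      have "real T * dons_eta T D i \<le> real T * s" using eis Tp by (intro mult_left_mono) auto
      then have eT: "real T * dons_eta T D i \<le> ?M" using Ts M2 by linarith
      have V1: "V \<le> ?M"
      proof -
        have "V = (real T * s) * s" unfolding Vs by (simp add: power2_eq_square)
        also have "\<dots> \<le> (real T * s) * 1" using s4 s0 Tp by (intro mult_left_mono) auto
        finally show ?thesis using Ts M2 by simp
      qed
      have V2: "V / dons_eta T D i \<le> 2 * ?M"
      proof -
        have "V \<le> real T * s * (2 * dons_eta T D i)"
          unfolding Vs power2_eq_square using s2 s0 Tp by (simp add: mult_left_mono mult.assoc)
        then have "V / dons_eta T D i \<le> 2 * (real T * s)" using ep by (simp add: divide_le_eq algebra_simps)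
        then show ?thesis using Ts M2 by simp
      qed
      have "(1 + G^2 / dons_eta T D i) * V = V + G^2 * (V / dons_eta T D i)" by (simp add: algebra_simps)
      also have "\<dots> \<le> ?M + G^2 * (2 * ?M)" using V1 V2 by (intro add_mono mult_left_mono) auto
      also have "\<dots> = (1 + 2 * G^2) * ?M" by (simp add: algebra_simps)
      finally have "(1 + G^2 / dons_eta T D i) * V \<le> (1 + 2 * G^2) * ?M" .
      then show ?thesis using that[of i] i1 mono eis s4 eT by auto
    qed
    let ?e = "dons_eta T D i"
    let ?\<gamma> = "dons_gamma T D i"
    have ep: "?e > 0" unfolding eta_eq using aa_pos[OF T D] by simp
    have gam: "0 < ?\<gamma>" "?\<gamma> < 1" using ep ei2 by (auto simp: dons_gamma_def)
    have fs': "\<forall>t\<in>{1..T}. concave_on S (\<lambda>x. exp (- \<alpha> * f t x)) \<and>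
       (\<forall>x\<in>S. (f t has_derivative (\<lambda>h. g t x \<bullet> h)) (at x within S) \<and> norm (g t x) \<le> G)" using fs by auto
    have run: "dons_run S g \<eta> ?\<gamma> T (ths i)" using runs i by auto
    have ER: "(\<Sum>t=1..T. f t (ths i t) - f t (z t)) \<le> 2 * G * D
     + (\<eta>/2) * (4 * D^2 + 4 * D * (1 + G^2 / (1 - ?\<gamma>)) * CARD('n)^2 * (\<Sum>t=2..T. norm (z t - z (t - 1))))
     + (1/(2*\<eta>)) * (ln (fact CARD('n) * (1 + G^2 / (1 - ?\<gamma>)) ^ CARD('n)) + T * CARD('n) * (- ln ?\<gamma>))"
      by (rule expert_regret[OF alpha eta eta2 gam G D S bnd fs' run zS]) (use T in simp)
    have g1: "1 - ?\<gamma> = ?e" by (simp add: dons_gamma_def)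
    let ?L = "1 + G^2 / ?e"
    have Lp: "?L \<ge> 1" using ep by simp
    have P1: "(\<eta>/2) * (4 * D^2 + 4 * D * ?L * CARD('n)^2 * (\<Sum>t=2..T. norm (z t - z (t - 1))))
        \<le> 2 * \<eta> * D^2 + 2 * \<eta> * D * CARD('n)^2 * (1 + 2 * G^2) * ?M"
    proof -
      have "?L * (\<Sum>t=2..T. norm (z t - z (t - 1))) \<le> ?L * V" using Vb Lp by (intro mult_left_mono) auto
      also have "\<dots> \<le> (1 + 2 * G^2) * ?M" using eV by simp
      finally have "4 * D * CARD('n)^2 * (?L * (\<Sum>t=2..T. norm (z t - z (t - 1)))) \<le> 4 * D * CARD('n)^2 * ((1 + 2 * G^2) * ?M)"
        using D by (intro mult_left_mono) auto
      then have "(\<eta>/2) * (4 * D^2 + 4 * D * CARD('n)^2 * (?L * (\<Sum>t=2..T. norm (z t - z (t - 1)))))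
          \<le> (\<eta>/2) * (4 * D^2 + 4 * D * CARD('n)^2 * ((1 + 2 * G^2) * ?M))"
        using eta by (intro mult_left_mono) auto
      then show ?thesis by (simp add: algebra_simps)
    qed
    have P2: "ln (fact CARD('n) * ?L ^ CARD('n)) + T * CARD('n) * (- ln ?\<gamma>)
        \<le> ln (fact CARD('n)) + CARD('n) * ln ?K3 + 3 * CARD('n) * ?M"
    proof -
      have "ln (fact CARD('n) * ?L ^ CARD('n)) = ln (fact CARD('n)) + CARD('n) * ln ?L"
        using Lp by (simp add: ln_mult ln_realpow)
      moreover have "ln ?L \<le> ln ?K3 + ?M"
      proof -
        have e1p: "dons_eta T D 1 > 0" unfolding eta_eq using aa_pos[OF T D] by simp
        have "G^2 / ?e \<le> G^2 / dons_eta T D 1" using ei1 e1p by (intro divide_left_mono) auto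
        then have "?L \<le> 1 + G^2 / dons_eta T D 1" by simp
        then have "ln ?L \<le> ln (1 + G^2 / dons_eta T D 1)" using Lp by (subst ln_le_cancel_iff) auto
        also have "\<dots> \<le> ln ?K3 + ln (real T)" by (rule ln_eta1[OF T D G])
        finally show ?thesis using M1 by simp
      qed
      moreover have "T * CARD('n) * (- ln ?\<gamma>) \<le> 2 * CARD('n) * ?M"
      proof -
        have "- ln ?\<gamma> \<le> 2 * ?e" using neg_ln_1m[of ?e] ep ei2 by (simp add: dons_gamma_def)
        then have "real T * (- ln ?\<gamma>) \<le> real T * (2 * ?e)" by (intro mult_left_mono) auto
        also have "\<dots> \<le> 2 * ?M" using eT by simp
        finally have "real T * (- ln ?\<gamma>) \<le> 2 * ?M" .
        then have "CARD('n) * (real T * (- ln ?\<gamma>)) \<le> CARD('n) * (2 * ?M)" by (intro mult_left_mono) auto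
        then show ?thesis by (simp add: algebra_simps)
      qed
      moreover have "?n * ln ?L \<le> ?n * (ln ?K3 + ?M)"
        using calculation(2) by (intro mult_left_mono) auto
      ultimately have "ln (fact CARD('n) * ?L ^ CARD('n)) + T * CARD('n) * (- ln ?\<gamma>)
          \<le> ln (fact CARD('n)) + CARD('n) * (ln ?K3 + ?M) + 2 * CARD('n) * ?M"
        by linarith
      then show ?thesis by (simp add: algebra_simps)
    qed
    have ER2: "(\<Sum>t=1..T. f t (ths i t) - f t (z t)) \<le> 2 * G * D + 2 * \<eta> * D^2
       + 2 * \<eta> * D * CARD('n)^2 * (1 + 2 * G^2) * ?M
       + (1/(2*\<eta>)) * (ln (fact CARD('n)) + CARD('n) * ln ?K3 + 3 * CARD('n) * ?M)"
    proof -
      have "(1/(2*\<eta>)) * (ln (fact CARD('n) * ?L ^ CARD('n)) + T * CARD('n) * (- ln ?\<gamma>))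
          \<le> (1/(2*\<eta>)) * (ln (fact CARD('n)) + CARD('n) * ln ?K3 + 3 * CARD('n) * ?M)"
        using P2 eta by (intro mult_left_mono) auto
      then show ?thesis using ER P1 unfolding g1 by linarith
    qed
    have MR: "(\<Sum>t=1..T. f t (?th t)) \<le> (\<Sum>t=1..T. f t (ths i t)) + (2 / \<alpha>) * ln (real ?N + 1)"
      by (rule mix_regret[OF N1 alpha S conc thS i])
    have NB: "(2 / \<alpha>) * ln (real ?N + 1) \<le> (2/\<alpha>) * \<bar>2 + (1/2) * log 2 (2 * D / (ln 2)^2)\<bar> + ((2/\<alpha>) / ln 2) * ?M"
    proof -
      have "ln (real ?N + 1) \<le> real ?N" using ln_add_one_self_le_self[of "real ?N"] by (simp add: add.commute)
      also have "\<dots> \<le> 2 + (1/2) * log 2 (2 * D / (ln 2)^2) + ln (real T) / ln 2" by (rule N_bound[OF T D])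
      also have "\<dots> \<le> \<bar>2 + (1/2) * log 2 (2 * D / (ln 2)^2)\<bar> + ?M / ln 2"
      proof -
        have "ln (real T) / ln 2 \<le> ?M / ln 2" using M1 l2 by (intro divide_right_mono) auto
        moreover have "2 + (1/2) * log 2 (2 * D / (ln 2)^2) \<le> \<bar>2 + (1/2) * log 2 (2 * D / (ln 2)^2)\<bar>" by (rule abs_ge_self)
        ultimately show ?thesis by linarith
      qed
      finally have "ln (real ?N + 1) \<le> \<bar>2 + (1/2) * log 2 (2 * D / (ln 2)^2)\<bar> + ?M / ln 2" .
      then have "(2 / \<alpha>) * ln (real ?N + 1) \<le> (2 / \<alpha>) * (\<bar>2 + (1/2) * log 2 (2 * D / (ln 2)^2)\<bar> + ?M / ln 2)"
        using alpha by (intro mult_left_mono) auto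
      then show ?thesis by (simp add: algebra_simps)
    qed
    have "(\<Sum>t=1..T. f t (?th t) - f t (z t)) \<le> ?B0 + ?B1 * ?M"
      using ER2 MR NB unfolding sumsplit sum_subtractf by (simp add: algebra_simps)
    from fin[OF this] show ?thesis by (simp only: add.assoc)
  qed
qed

theorem theorem3p7:
  fixes \<alpha> G D \<eta> :: real
  assumes "\<alpha> > 0" and "G > 0" and "D \<ge> 1" and "\<eta> > 0"
    and "\<eta> \<le> (1/2) * min (1 / (4 * G * D)) \<alpha>"
  shows "\<exists>C::real. \<forall>(T::nat) (S :: (real ^ 'n) set) (f :: nat \<Rightarrow> real ^ 'n \<Rightarrow> real)
      (g :: nat \<Rightarrow> real ^ 'n \<Rightarrow> real ^ 'n) (ths :: nat \<Rightarrow> nat \<Rightarrow> real ^ 'n)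
      (z :: nat \<Rightarrow> real ^ 'n) (V :: real).
    T \<ge> 2 \<and> compact S \<and> convex S \<and> (\<forall>x\<in>S. norm x \<le> D) \<and>
    (\<forall>t\<in>{1..T}. convex_on S (f t) \<and> concave_on S (\<lambda>x. exp (- \<alpha> * f t x)) \<and>
       (\<forall>x\<in>S. (f t has_derivative (\<lambda>h. g t x \<bullet> h)) (at x within S) \<and> norm (g t x) \<le> G)) \<and>
    (\<forall>i\<in>{1..dons_N T D}. dons_run S g \<eta> (dons_gamma T D i) T (ths i)) \<and>
    (\<forall>t\<in>{1..T}. z t \<in> S) \<and> (\<Sum>t=2..T. norm (z t - z (t - 1))) \<le> V
    \<longrightarrow> (\<Sum>t=1..T. f t (mix_play \<alpha> (dons_N T D) f ths t) - f t (z t))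
          \<le> C * max (ln (real T)) (sqrt (real T * V))"
proof (rule exI[where x = "((2 * G * D + 2 * \<eta> * D^2 + (1/(2*\<eta>)) * (ln (fact CARD('n)) + CARD('n) * ln (1 + 2 * G^2 * sqrt (2 * D) / ln 2))
          + (2/\<alpha>) * \<bar>2 + (1/2) * log 2 (2 * D / (ln 2)^2)\<bar>) / ln 2
        + 2 * \<eta> * D * CARD('n)^2 * (1 + 2 * G^2) + (1/(2*\<eta>)) * (3 * CARD('n)) + (2/\<alpha>) / ln 2
        + 8 * G * D)"], intro allI impI)
  fix T :: nat and S :: "(real ^ 'n) set" and f :: "nat \<Rightarrow> real ^ 'n \<Rightarrow> real"
    and g :: "nat \<Rightarrow> real ^ 'n \<Rightarrow> real ^ 'n" and ths :: "nat \<Rightarrow> nat \<Rightarrow> real ^ 'n"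
    and z :: "nat \<Rightarrow> real ^ 'n" and V :: real
  assume H: "T \<ge> 2 \<and> compact S \<and> convex S \<and> (\<forall>x\<in>S. norm x \<le> D) \<and>
    (\<forall>t\<in>{1..T}. convex_on S (f t) \<and> concave_on S (\<lambda>x. exp (- \<alpha> * f t x)) \<and>
       (\<forall>x\<in>S. (f t has_derivative (\<lambda>h. g t x \<bullet> h)) (at x within S) \<and> norm (g t x) \<le> G)) \<and>
    (\<forall>i\<in>{1..dons_N T D}. dons_run S g \<eta> (dons_gamma T D i) T (ths i)) \<and>
    (\<forall>t\<in>{1..T}. z t \<in> S) \<and> (\<Sum>t=2..T. norm (z t - z (t - 1))) \<le> V"
  show "(\<Sum>t=1..T. f t (mix_play \<alpha> (dons_N T D) f ths t) - f t (z t))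
          \<le> ((2 * G * D + 2 * \<eta> * D^2 + (1/(2*\<eta>)) * (ln (fact CARD('n)) + CARD('n) * ln (1 + 2 * G^2 * sqrt (2 * D) / ln 2))
          + (2/\<alpha>) * \<bar>2 + (1/2) * log 2 (2 * D / (ln 2)^2)\<bar>) / ln 2
        + 2 * \<eta> * D * CARD('n)^2 * (1 + 2 * G^2) + (1/(2*\<eta>)) * (3 * CARD('n)) + (2/\<alpha>) / ln 2
        + 8 * G * D) * max (ln (real T)) (sqrt (real T * V))"
    by (rule main_bound[OF assms]) (use H in auto)
qed

end
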